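(* Let $\rho_1,\rho_2$ be two rank-two density operators on $\mathbb{C}^2\otimes\mathbb{C}^2$ with orthogonal supports. Then the following are equivalent: (a) $\rho_1,\rho_2$ can be perfectly distinguished by a separable POVM; (b) $\rho_1,\rho_2$ can be perfectly distinguished by LOCC; (c) the orthogonal projectors onto the supports of $\rho_1$ and of $\rho_2$ are both separable.
   Context: A positive semidefinite operator on $\mathbb{C}^2\otimes\mathbb{C}^2$ is separable if it is a nonnegative linear combination of product projectors $|a\rangle\langle a|\otimes|b\rangle\langle b|$; a POVM is separable if all its elements are separable. LOCC means measurements implementable by local operations on each qubit and classical communication between the two parties. A POVM $\{\Pi_1,\Pi_2\}$ perfectly distinguishes $\rho_1,\rho_2$ if $\mathrm{tr}(\Pi_i\rho_j)=\delta_{ij}$. *)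

theory Defs
  imports "HOL-Analysis.Analysis"
begin

type_synonym qvec = "complex^2"
type_synonym qop = "complex^2^2"
type_synonym qqvec = "complex^(2 \<times> 2)"
type_synonym qqop = "complex^(2 \<times> 2)^(2 \<times> 2)"

definition adj :: "complex^'n^'n \<Rightarrow> complex^'n^'n" where
  "adj A = (\<chi> i j. cnj (A $ j $ i))"

definition mtrace :: "complex^'n^'n \<Rightarrow> complex" where
  "mtrace A = (\<Sum>i\<in>UNIV. A $ i $ i)"

definition cinn :: "complex^'n \<Rightarrow> complex^'n \<Rightarrow> complex" where
  "cinn x y = (\<Sum>i\<in>UNIV. cnj (x $ i) * y $ i)"

definition psd :: "complex^'n^'n \<Rightarrow> bool" where
  "psd A = (\<forall>v. Im (cinn v (A *v v)) = 0 \<and> 0 \<le> Re (cinn v (A *v v)))"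

definition density :: "complex^'n^'n \<Rightarrow> bool" where
  "density \<rho> = (psd \<rho> \<and> mtrace \<rho> = 1)"

definition support :: "complex^'n^'n \<Rightarrow> (complex^'n) set" where
  "support A = range (\<lambda>v. A *v v)"

definition orth_proj_onto :: "complex^'n^'n \<Rightarrow> (complex^'n) set \<Rightarrow> bool" where
  "orth_proj_onto P S = (adj P = P \<and> P ** P = P \<and> support P = S)"

definition outer :: "complex^'n \<Rightarrow> complex^'n^'n" where
  "outer v = (\<chi> i j. v $ i * cnj (v $ j))"

definition tensor :: "complex^'a^'a \<Rightarrow> complex^'b^'b \<Rightarrow> complex^('a \<times> 'b)^('a \<times> 'b)" where
  "tensor A B = (\<chi> p q. A $ fst p $ fst q * B $ snd p $ snd q)"

definition separable :: "qqop \<Rightarrow> bool" where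
  "separable A = (\<exists>(n::nat) (c::nat \<Rightarrow> real) (a::nat \<Rightarrow> qvec) (b::nat \<Rightarrow> qvec).
      (\<forall>k<n. 0 \<le> c k \<and> norm (a k) = 1 \<and> norm (b k) = 1) \<and>
      A = (\<Sum>k<n. c k *\<^sub>R tensor (outer (a k)) (outer (b k))))"

definition povm2 :: "qqop \<Rightarrow> qqop \<Rightarrow> bool" where
  "povm2 P1 P2 = (psd P1 \<and> psd P2 \<and> P1 + P2 = mat 1)"

definition sep_povm2 :: "qqop \<Rightarrow> qqop \<Rightarrow> bool" where
  "sep_povm2 P1 P2 = (povm2 P1 P2 \<and> separable P1 \<and> separable P2)"

definition perfectly_distinguishes :: "qqop \<Rightarrow> qqop \<Rightarrow> qqop \<Rightarrow> qqop \<Rightarrow> bool" where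
  "perfectly_distinguishes P1 P2 \<rho>1 \<rho>2 =
     (mtrace (P1 ** \<rho>1) = 1 \<and> mtrace (P1 ** \<rho>2) = 0 \<and>
      mtrace (P2 ** \<rho>1) = 0 \<and> mtrace (P2 ** \<rho>2) = 1)"

definition local_instrument :: "qop list \<Rightarrow> bool" where
  "local_instrument Ms = ((\<Sum>m\<leftarrow>Ms. adj m ** m) = mat 1)"

text \<open>Kraus operators of the overall instruments realisable by finitely many rounds of
  local operations and classical communication: in each round, conditioned on all earlier
  outcomes (the branch j), Alice or Bob performs a local measurement.\<close>
inductive locc_kraus :: "qqop list \<Rightarrow> bool" where
  start: "locc_kraus [mat 1]"
| alice: "\<lbrakk> locc_kraus Ks; length Ms = length Ks; \<forall>j<length Ks. local_instrument (Ms ! j) \<rbrakk>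
          \<Longrightarrow> locc_kraus (concat (map (\<lambda>j. map (\<lambda>m. tensor m (mat 1) ** (Ks ! j)) (Ms ! j))
                                         [0..<length Ks]))"
| bob: "\<lbrakk> locc_kraus Ks; length Ms = length Ks; \<forall>j<length Ks. local_instrument (Ms ! j) \<rbrakk>
          \<Longrightarrow> locc_kraus (concat (map (\<lambda>j. map (\<lambda>m. tensor (mat 1) m ** (Ks ! j)) (Ms ! j))
                                         [0..<length Ks]))"

text \<open>a two-outcome POVM implementable by LOCC: the final outcomes of an LOCC protocol are
  grouped into the two answers\<close>
definition locc_povm2 :: "qqop \<Rightarrow> qqop \<Rightarrow> bool" where
  "locc_povm2 P1 P2 = (\<exists>Ks (f::nat \<Rightarrow> bool). locc_kraus Ks \<and>
      P1 = (\<Sum>j | j < length Ks \<and> f j. adj (Ks ! j) ** (Ks ! j)) \<and>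
      P2 = (\<Sum>j | j < length Ks \<and> \<not> f j. adj (Ks ! j) ** (Ks ! j)))"

end

theory Submission
  imports Defs
begin

lemma cinn_add_right: "cinn x (y + z) = cinn x y + cinn x z"
  by (simp add: cinn_def distrib_left sum.distrib)
lemma cinn_add_left: "cinn (x + y) z = cinn x z + cinn y z"
  by (simp add: cinn_def distrib_right sum.distrib)
lemma cinn_diff_right: "cinn x (y - z) = cinn x y - cinn x z"
  by (simp add: cinn_def right_diff_distrib sum_subtractf)
lemma cinn_diff_left: "cinn (x - y) z = cinn x z - cinn y z"
  by (simp add: cinn_def left_diff_distrib sum_subtractf)
lemma cinn_scale_right: "cinn x (c *s y) = c * cinn x y"
  by (simp add: cinn_def sum_distrib_left mult.left_commute)
lemma cinn_scale_left: "cinn (c *s x) y = cnj c * cinn x y"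
  by (simp add: cinn_def sum_distrib_left mult.assoc)
lemma cinn_zero_left[simp]: "cinn 0 y = 0"
  by (simp add: cinn_def)
lemma cinn_zero_right[simp]: "cinn x 0 = 0"
  by (simp add: cinn_def)
lemma cinn_sum_right: "cinn x (sum f A) = (\<Sum>a\<in>A. cinn x (f a))"
  by (induction A rule: infinite_finite_induct) (auto simp: cinn_add_right)
lemma cinn_sum_left: "cinn (sum f A) y = (\<Sum>a\<in>A. cinn (f a) y)"
  by (induction A rule: infinite_finite_induct) (auto simp: cinn_add_left)
lemma cinn_cnj: "cnj (cinn x y) = cinn y x"
  by (simp add: cinn_def mult.commute)
lemma cinn_self: "cinn x x = complex_of_real (\<Sum>i\<in>UNIV. (cmod (x$i))\<^sup>2)"
  unfolding cinn_def of_real_sum by (rule sum.cong) (simp_all, metis complex_norm_square mult.commute of_real_power)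
lemma cinn_self_eq0: "cinn x x = 0 \<longleftrightarrow> x = 0"
proof
  assume "cinn x x = 0"
  then have "(\<Sum>i\<in>UNIV. (cmod (x$i))\<^sup>2) = 0" unfolding cinn_self of_real_eq_0_iff .
  then have "\<forall>i\<in>UNIV. (cmod (x$i))\<^sup>2 = 0"
    by (subst (asm) sum_nonneg_eq_0_iff) auto
  then show "x = 0" by (simp add: vec_eq_iff)
qed simp
lemma cinn_self_Re: "0 \<le> Re (cinn x x)"
  by (simp add: cinn_self sum_nonneg)
lemma cinn_self_Im: "Im (cinn x x) = 0"
  by (simp add: cinn_self)

lemma adj_nth[simp]: "adj A $ i $ j = cnj (A $ j $ i)"
  by (simp add: adj_def)
lemma adj_adj[simp]: "adj (adj A) = A"
  by (simp add: vec_eq_iff)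
lemma adj_mult: "adj (A ** B) = adj B ** adj A"
  by (simp add: vec_eq_iff matrix_matrix_mult_def mult.commute)
lemma adj_add: "adj (A + B) = adj A + adj B"
  by (simp add: vec_eq_iff)
lemma adj_diff: "adj (A - B) = adj A - adj B"
  by (simp add: vec_eq_iff)
lemma adj_mat[simp]: "adj (mat 1) = mat 1"
  by (simp add: vec_eq_iff mat_def)
lemma adj_scaleR: "adj (c *\<^sub>R A) = c *\<^sub>R adj A"
  by (simp add: vec_eq_iff)
lemma adj_sum: "adj (sum f S) = (\<Sum>x\<in>S. adj (f x))"
  by (induction S rule: infinite_finite_induct) (auto simp: adj_add vec_eq_iff)
lemma adj_zero[simp]: "adj 0 = 0"
  by (simp add: vec_eq_iff)

lemma cinn_adj: "cinn x (A *v y) = cinn (adj A *v x) y"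
  unfolding cinn_def matrix_vector_mult_def
  apply (simp add: sum_distrib_left sum_distrib_right)
  apply (subst sum.swap) apply (simp add: mult_ac)
  done

lemma cinn_adj': "cinn (A *v x) y = cinn x (adj A *v y)"
  by (simp add: cinn_adj)

lemma outer_mv: "outer v *v w = cinn v w *s v"
  by (simp add: outer_def matrix_vector_mult_def cinn_def vec_eq_iff sum_distrib_left mult_ac)
lemma adj_outer[simp]: "adj (outer v) = outer v"
  by (simp add: outer_def vec_eq_iff)

lemma mtrace_outer_mult: "mtrace (outer x ** A) = cinn x (A *v x)"
  unfolding mtrace_def outer_def cinn_def matrix_matrix_mult_def matrix_vector_mult_def
  apply (simp add: sum_distrib_left sum_distrib_right)
  apply (subst sum.swap) apply (simp add: mult_ac)
  done

lemma mtrace_add: "mtrace (A + B) = mtrace A + mtrace B"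
  by (simp add: mtrace_def sum.distrib)
lemma mtrace_sum: "mtrace (sum f S) = (\<Sum>x\<in>S. mtrace (f x))"
  by (simp add: mtrace_def sum_component; rule sum.swap)
lemma mtrace_scaleR: "mtrace (c *\<^sub>R A) = of_real c * mtrace A"
  apply (simp add: mtrace_def sum_distrib_left) by (simp add: scaleR_conv_of_real)

lemma matrix_add_rdistrib: "(A + B) ** C = A ** C + B ** C"
  by (vector matrix_matrix_mult_def sum.distrib distrib_right)
lemma matrix_mult_sum_left: "(sum f S) ** B = (\<Sum>x\<in>S. f x ** B)"
  by (induction S rule: infinite_finite_induct) (auto simp: matrix_add_rdistrib)
lemma matrix_mult_sum_right: "B ** (sum f S) = (\<Sum>x\<in>S. B ** f x)"
  by (induction S rule: infinite_finite_induct) (auto simp: matrix_add_ldistrib)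
lemma mv_sum_left: "(sum f S) *v x = (\<Sum>a\<in>S. f a *v x)"
  by (induction S rule: infinite_finite_induct) (auto simp: matrix_vector_mult_add_rdistrib)
lemma mv_scaleR_left: "(c *\<^sub>R A) *v x = of_real c *s (A *v x)"
  apply (simp add: vec_eq_iff matrix_vector_mult_def sum_distrib_left) by (simp add: scaleR_conv_of_real mult.assoc)
lemma mv_scale_right: "(A::complex^_^_) *v (c *s x) = c *s (A *v x)"
  by (simp add: vec_eq_iff matrix_vector_mult_def sum_distrib_left mult.left_commute)


lemma cinn_mv_expand:
  "cinn (x + y) (A *v (x + y)) = cinn x (A *v x) + cinn y (A *v y) + cinn x (A *v y) + cinn y (A *v x)"
  by (simp add: matrix_vector_right_distrib cinn_add_left cinn_add_right)

lemma psd_herm: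
  assumes "psd A" shows "adj A = A"
proof -
  have Im0: "Im (cinn v (A *v v)) = 0" for v using assms by (simp add: psd_def)
  have key: "cinn y (A *v x) = cnj (cinn x (A *v y))" for x y
  proof -
    define a where "a = cinn x (A *v y)"
    define b where "b = cinn y (A *v x)"
    have 1: "Im (a + b) = 0"
      using Im0[of "x + y"] Im0[of x] Im0[of y] unfolding cinn_mv_expand a_def b_def by simp
    have e: "cinn (x + \<i> *s y) (A *v (x + \<i> *s y)) =
       cinn x (A *v x) + cinn y (A *v y) + \<i> * a - \<i> * b"
      unfolding cinn_mv_expand a_def b_def
      by (simp add: mv_scale_right cinn_scale_left cinn_scale_right)
    have 2: "Re a - Re b = 0"
      using Im0[of "x + \<i> *s y"] Im0[of x] Im0[of y] unfolding e by simp
    from 1 2 show ?thesis unfolding a_def[symmetric] b_def[symmetric]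
      by (simp add: complex_eq_iff)
  qed
  have "A *v x = adj A *v x" for x
  proof -
    have "cinn y (A *v x) = cinn y (adj A *v x)" for y
      using key[of y x] by (simp add: cinn_adj cinn_cnj)
    then have "cinn (A *v x - adj A *v x) (A *v x - adj A *v x) = 0"
      by (simp add: cinn_diff_left cinn_diff_right)
    then show ?thesis by (simp add: cinn_self_eq0)
  qed
  then show ?thesis by (simp add: matrix_eq)
qed

lemma psd_zero_form:
  assumes "psd A" and "cinn x (A *v x) = 0" shows "A *v x = 0"
proof -
  have H: "adj A = A" using psd_herm[OF assms(1)] .
  define w where "w = A *v x"
  define N where "N = Re (cinn w w)"
  define M where "M = Re (cinn w (A *v w))"
  have N0: "N \<ge> 0" unfolding N_def by (rule cinn_self_Re)
  have M0: "M \<ge> 0" using assms(1) unfolding M_def psd_def by blast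
  have cw: "cinn w w = of_real N" unfolding N_def by (simp add: complex_eq_iff cinn_self_Im)
  have c1: "cinn w (A *v x) = of_real N" using cw by (simp add: w_def)
  have c2: "cinn x (A *v w) = of_real N"
    using cw by (simp add: cinn_adj H w_def)
  have ge: "0 \<le> Re (cinn (x - of_real s *s w) (A *v (x - of_real s *s w)))" for s
    using assms(1) unfolding psd_def by blast
  have eq: "Re (cinn (x - of_real s *s w) (A *v (x - of_real s *s w))) = - 2 * s * N + s * s * M" for s
    using assms(2) c1 c2 unfolding M_def
    by (simp add: matrix_vector_mult_diff_distrib mv_scale_right cinn_diff_left cinn_diff_right
        cinn_scale_left cinn_scale_right algebra_simps)
  have ineq: "0 \<le> - 2 * s * N + s * s * M" for s using ge[of s] eq[of s] by simp
  have "N = 0"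
  proof (rule ccontr)
    assume "N \<noteq> 0" then have Np: "N > 0" using N0 by simp
    have "0 \<le> - 2 * (N/(M+1)) * N + (N/(M+1)) * (N/(M+1)) * M" by (rule ineq)
    moreover have "- 2 * (N/(M+1)) * N + (N/(M+1)) * (N/(M+1)) * M < 0"
    proof -
      have "(N/(M+1)) * (N/(M+1)) * M \<le> (N/(M+1)) * N"
      proof -
        have "(N/(M+1)) * M \<le> N" using M0 Np by (simp add: field_simps)
        then show ?thesis using M0 Np
          by (metis mult.assoc mult_left_mono divide_nonneg_nonneg less_le add_nonneg_pos zero_less_one)
      qed
      moreover have "0 < (N/(M+1)) * N" using Np M0 by simp
      ultimately show ?thesis by linarith
    qed
    ultimately show False by linarith
  qed
  then have "cinn w w = 0" using cw by simp
  then show ?thesis by (simp add: cinn_self_eq0 w_def)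
qed

lemma psd_outer: "psd (outer x)"
proof -
  have "cinn v (outer x *v v) = of_real ((cmod (cinn x v))\<^sup>2)" for v
  proof -
    have "cinn v x = cnj (cinn x v)" by (simp add: cinn_cnj)
    then show ?thesis by (simp add: outer_mv cinn_scale_right) (metis complex_norm_square of_real_power)
  qed
  then show ?thesis unfolding psd_def by simp
qed

lemma psd_add: "psd A \<Longrightarrow> psd B \<Longrightarrow> psd (A + B)"
  by (simp add: psd_def matrix_vector_mult_add_rdistrib cinn_add_right)

lemma psd_zero: "psd 0"
  by (simp add: psd_def)

lemma psd_scaleR: "psd A \<Longrightarrow> 0 \<le> c \<Longrightarrow> psd (c *\<^sub>R A)"
  by (simp add: psd_def mv_scaleR_left cinn_scale_right)

lemma psd_sum: "(\<And>x. x \<in> S \<Longrightarrow> psd (f x)) \<Longrightarrow> psd (sum f S)"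
  by (induction S rule: infinite_finite_induct) (auto simp: psd_zero psd_add)


definition pv :: "complex^'a \<Rightarrow> complex^'b \<Rightarrow> complex^('a \<times> 'b)" where
  "pv a b = (\<chi> p. a $ fst p * b $ snd p)"

lemma pv_nth[simp]: "pv a b $ p = a $ fst p * b $ snd p"
  by (simp add: pv_def)

lemma tensor_nth[simp]: "tensor A B $ p $ q = A $ fst p $ fst q * B $ snd p $ snd q"
  by (simp add: tensor_def)

lemma sum_UNIV_prod: "(\<Sum>p\<in>(UNIV::('a::finite \<times> 'b::finite) set). f p) = (\<Sum>i\<in>UNIV. \<Sum>j\<in>UNIV. f (i,j))"
  by (simp add: sum.cartesian_product UNIV_Times_UNIV[symmetric] del: UNIV_Times_UNIV)

lemma tensor_outer: "tensor (outer a) (outer b) = outer (pv a b)"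
  by (simp add: vec_eq_iff outer_def mult_ac)

lemma tensor_mult: "tensor A B ** tensor C D = tensor (A ** C) (B ** D)"
proof -
  have "(\<Sum>i\<in>UNIV. \<Sum>j\<in>UNIV. A $ a $ i * B $ b $ j * (C $ i $ c * D $ j $ d)) =
        (\<Sum>i\<in>UNIV. A $ a $ i * C $ i $ c) * (\<Sum>j\<in>UNIV. B $ b $ j * D $ j $ d)" for a b c d
    by (simp add: sum_product mult_ac)
  then show ?thesis
    by (simp add: vec_eq_iff matrix_matrix_mult_def sum_UNIV_prod)
qed

lemma adj_tensor: "adj (tensor A B) = tensor (adj A) (adj B)"
  by (simp add: vec_eq_iff)

lemma tensor_mat1: "tensor (mat 1) (mat 1) = mat 1"
  by (auto simp: vec_eq_iff mat_def prod_eq_iff)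

lemma tensor_add_left: "tensor (A + A') B = tensor A B + tensor A' B"
  by (simp add: vec_eq_iff distrib_right)
lemma tensor_add_right: "tensor A (B + B') = tensor A B + tensor A B'"
  by (simp add: vec_eq_iff distrib_left)
lemma tensor_zero_left[simp]: "tensor 0 B = 0"
  by (simp add: vec_eq_iff)
lemma tensor_zero_right[simp]: "tensor A 0 = 0"
  by (simp add: vec_eq_iff)
lemma tensor_sum_left: "tensor (sum f S) B = (\<Sum>x\<in>S. tensor (f x) B)"
  by (induction S rule: infinite_finite_induct) (auto simp: tensor_add_left)
lemma tensor_sum_right: "tensor A (sum f S) = (\<Sum>x\<in>S. tensor A (f x))"
  by (induction S rule: infinite_finite_induct) (auto simp: tensor_add_right)
lemma tensor_sum_list_left: "tensor (sum_list (map f xs)) B = sum_list (map (\<lambda>x. tensor (f x) B) xs)"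
  by (induction xs) (auto simp: tensor_add_left)
lemma tensor_sum_list_right: "tensor A (sum_list (map f xs)) = sum_list (map (\<lambda>x. tensor A (f x)) xs)"
  by (induction xs) (auto simp: tensor_add_right)

lemma tensor_mv_pv: "tensor A B *v pv a b = pv (A *v a) (B *v b)"
proof -
  have "(\<Sum>i\<in>UNIV. \<Sum>j\<in>UNIV. A $ p $ i * B $ q $ j * (a $ i * b $ j)) =
        (\<Sum>i\<in>UNIV. A $ p $ i * a $ i) * (\<Sum>j\<in>UNIV. B $ q $ j * b $ j)" for p q
    by (simp add: sum_product mult_ac)
  then show ?thesis
    by (simp add: vec_eq_iff matrix_vector_mult_def sum_UNIV_prod)
qed

lemma cinn_pv: "cinn (pv a b) (pv c d) = cinn a c * cinn b d"
proof -
  have "(\<Sum>i\<in>UNIV. \<Sum>j\<in>UNIV. cnj (a $ i) * cnj (b $ j) * (c $ i * d $ j)) =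
        (\<Sum>i\<in>UNIV. cnj (a $ i) * c $ i) * (\<Sum>j\<in>UNIV. cnj (b $ j) * d $ j)"
    by (simp add: sum_product mult_ac)
  then show ?thesis
    by (simp add: cinn_def sum_UNIV_prod)
qed

lemma pv_scaleR_left: "pv (r *\<^sub>R a) b = r *\<^sub>R pv a b"
  by (simp add: vec_eq_iff)
lemma pv_scaleR_right: "pv a (r *\<^sub>R b) = r *\<^sub>R pv a b"
  by (simp add: vec_eq_iff)
lemma pv_scale_left: "pv (c *s a) b = c *s pv a b"
  by (simp add: vec_eq_iff mult.assoc)
lemma pv_scale_right: "pv a (c *s b) = c *s pv a b"
  by (simp add: vec_eq_iff mult_ac)
lemma pv_add_left: "pv (a + a') b = pv a b + pv a' b"
  by (simp add: vec_eq_iff distrib_right)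
lemma pv_add_right: "pv a (b + b') = pv a b + pv a b'"
  by (simp add: vec_eq_iff distrib_left)
lemma pv_zero_left[simp]: "pv 0 b = 0" by (simp add: vec_eq_iff)
lemma pv_zero_right[simp]: "pv a 0 = 0" by (simp add: vec_eq_iff)

lemma outer_scaleR: "outer (r *\<^sub>R a) = (r * r) *\<^sub>R outer a"
  by (simp add: vec_eq_iff outer_def)
lemma outer_zero[simp]: "outer 0 = 0"
  by (simp add: vec_eq_iff outer_def)

lemma adj_mult_self: "adj A ** A = (\<Sum>i\<in>UNIV. outer (\<chi> j. cnj (A$i$j)))"
  by (simp add: vec_eq_iff matrix_matrix_mult_def outer_def sum_component)

lemma sep_zero: "separable 0"
  unfolding separable_def by (rule exI[of _ 0]) simp

lemma sep_add_term:
  assumes "separable A" "0 \<le> c" "norm a = 1" "norm b = 1"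
  shows "separable (A + c *\<^sub>R tensor (outer a) (outer b))"
proof -
  obtain n cs as bs where h: "\<forall>k<(n::nat). 0 \<le> cs k \<and> norm (as k) = 1 \<and> norm (bs k) = 1"
    and A: "A = (\<Sum>k<n. cs k *\<^sub>R tensor (outer (as k)) (outer (bs k)))"
    using assms(1) unfolding separable_def by blast
  define cs' where "cs' = cs(n := c)"
  define as' where "as' = as(n := a)"
  define bs' where "bs' = bs(n := b)"
  have "A = (\<Sum>k<n. cs' k *\<^sub>R tensor (outer (as' k)) (outer (bs' k)))"
    unfolding A cs'_def as'_def bs'_def by (rule sum.cong) auto
  then have "A + c *\<^sub>R tensor (outer a) (outer b) = (\<Sum>k<Suc n. cs' k *\<^sub>R tensor (outer (as' k)) (outer (bs' k)))"
    by (simp add: cs'_def as'_def bs'_def)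
  moreover have "\<forall>k<Suc n. 0 \<le> cs' k \<and> norm (as' k) = 1 \<and> norm (bs' k) = 1"
    using h assms by (auto simp: cs'_def as'_def bs'_def less_Suc_eq)
  ultimately show ?thesis unfolding separable_def
    by (intro exI[where x="Suc n"] exI[where x=cs'] exI[where x=as'] exI[where x=bs'] conjI)
qed

lemma sep_add:
  assumes "separable A" "separable B" shows "separable (A + B)"
proof -
  obtain n cs as bs where h: "\<forall>k<(n::nat). 0 \<le> cs k \<and> norm (as k) = 1 \<and> norm (bs k) = 1"
    and B: "B = (\<Sum>k<n. cs k *\<^sub>R tensor (outer (as k)) (outer (bs k)))"
    using assms(2) unfolding separable_def by blast
  have "m \<le> n \<Longrightarrow> separable (A + (\<Sum>k<m. cs k *\<^sub>R tensor (outer (as k)) (outer (bs k))))" for m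
  proof (induction m)
    case 0 then show ?case using assms(1) by simp
  next
    case (Suc m)
    then have "separable (A + (\<Sum>k<m. cs k *\<^sub>R tensor (outer (as k)) (outer (bs k)))
        + cs m *\<^sub>R tensor (outer (as m)) (outer (bs m)))"
      using h by (intro sep_add_term) auto
    then show ?case by (simp add: add.assoc)
  qed
  then show ?thesis using B by simp
qed

lemma sep_scaleR:
  assumes "separable A" "0 \<le> r" shows "separable (r *\<^sub>R A)"
proof -
  obtain n cs as bs where h: "\<forall>k<(n::nat). 0 \<le> cs k \<and> norm (as k) = 1 \<and> norm (bs k) = 1"
    and A: "A = (\<Sum>k<n. cs k *\<^sub>R tensor (outer (as k)) (outer (bs k)))"
    using assms(1) unfolding separable_def by blast
  have "r *\<^sub>R A = (\<Sum>k<n. (r * cs k) *\<^sub>R tensor (outer (as k)) (outer (bs k)))"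
    unfolding A by (simp add: scaleR_sum_right)
  moreover have "\<forall>k<n. 0 \<le> r * cs k \<and> norm (as k) = 1 \<and> norm (bs k) = 1"
    using h assms(2) by simp
  ultimately show ?thesis unfolding separable_def
    by (intro exI[where x=n] exI[where x="\<lambda>k. r * cs k"] exI[where x=as] exI[where x=bs] conjI)
qed

lemma sep_sum: "(\<And>x. x \<in> S \<Longrightarrow> separable (f x)) \<Longrightarrow> separable (sum f S)"
  by (induction S rule: infinite_finite_induct) (auto simp: sep_zero sep_add)

lemma sep_outer_pv: "separable (outer (pv (a::qvec) (b::qvec)))"
proof (cases "a = 0 \<or> b = 0")
  case True then show ?thesis by (auto simp: sep_zero)
next
  case False
  then have na: "norm a \<noteq> 0" and nb: "norm b \<noteq> 0" by auto
  define a' where "a' = (1 / norm a) *\<^sub>R a"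
  define b' where "b' = (1 / norm b) *\<^sub>R b"
  have a: "a = norm a *\<^sub>R a'" and b: "b = norm b *\<^sub>R b'"
    using na nb by (simp_all add: a'_def b'_def)
  have n1: "norm a' = 1" "norm b' = 1" using na nb by (simp_all add: a'_def b'_def)
  have "outer (pv a b) = 0 + ((norm a * norm b) * (norm a * norm b)) *\<^sub>R tensor (outer a') (outer b')"
    by (subst a, subst b) (simp add: pv_scaleR_left pv_scaleR_right outer_scaleR tensor_outer)
  also have "separable \<dots>"
    by (rule sep_add_term[OF sep_zero]) (simp_all add: n1)
  finally show ?thesis .
qed

lemma sep_decomp:
  assumes "separable A"
  obtains n c x where "\<forall>k<(n::nat). 0 \<le> c k \<and> (\<exists>a b. x k = pv a b \<and> norm (a::qvec) = 1 \<and> norm (b::qvec) = 1)"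
    and "A = (\<Sum>k<n. c k *\<^sub>R outer (x k))"
proof -
  obtain n cs as bs where h: "\<forall>k<(n::nat). 0 \<le> cs k \<and> norm (as k) = 1 \<and> norm (bs k) = 1"
    and A: "A = (\<Sum>k<n. cs k *\<^sub>R tensor (outer (as k)) (outer (bs k)))"
    using assms(1) unfolding separable_def by blast
  show ?thesis
    apply (rule that[of n cs "\<lambda>k. pv (as k) (bs k)"])
    using h A by (auto simp: tensor_outer)
qed

lemma sep_psd: "separable A \<Longrightarrow> psd A"
  by (erule sep_decomp) (auto intro!: psd_sum psd_scaleR psd_outer)


lemma sum_list_concat': "sum_list (concat xss) = sum_list (map sum_list xss)"
  by (induction xss) simp_all

lemma sum_list_mult_left: "sum_list (map (\<lambda>x. f x ** B) xs) = sum_list (map f xs) ** B"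
  by (induction xs) (simp_all add: matrix_add_rdistrib)
lemma sum_list_mult_right: "sum_list (map (\<lambda>x. B ** f x) xs) = B ** sum_list (map f xs)"
  by (induction xs) (simp_all add: matrix_add_ldistrib)

lemma sum_list_nth_map: "sum_list (map (\<lambda>j. g (xs ! j)) [0..<length xs]) = sum_list (map g xs)"
proof -
  have "map (\<lambda>j. g (xs ! j)) [0..<length xs] = map g (map (\<lambda>j. xs ! j) [0..<length xs])" by simp
  then show ?thesis by (simp only: map_nth)
qed

lemma sum_list_nth_map': "(\<And>j. j < length xs \<Longrightarrow> h j = g (xs ! j)) \<Longrightarrow>
   sum_list (map h [0..<length xs]) = sum_list (map g xs)"
proof -
  assume a: "\<And>j. j < length xs \<Longrightarrow> h j = g (xs ! j)"
  have "map h [0..<length xs] = map (\<lambda>j. g (xs ! j)) [0..<length xs]"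
    using a by (intro map_cong) auto
  then show ?thesis using sum_list_nth_map by metis
qed

lemma adj_mult_helper: "adj (T ** K) ** (T ** K) = adj K ** ((adj T ** T) ** K)"
  by (simp add: adj_mult matrix_mul_assoc)

lemma kraus_alice: "adj (tensor m (mat 1) ** K) ** (tensor m (mat 1) ** K)
   = adj K ** (tensor (adj m ** m) (mat 1) ** K)"
  by (simp only: adj_mult_helper) (simp add: adj_tensor tensor_mult)
lemma kraus_bob: "adj (tensor (mat 1) m ** K) ** (tensor (mat 1) m ** K)
   = adj K ** (tensor (mat 1) (adj m ** m) ** K)"
  by (simp only: adj_mult_helper) (simp add: adj_tensor tensor_mult)

lemma locc_props:
  assumes "locc_kraus Ks"
  shows "(\<forall>K\<in>set Ks. \<exists>A B. K = tensor A B) \<and> sum_list (map (\<lambda>K. adj K ** K) Ks) = mat 1"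
  using assms
proof (induction rule: locc_kraus.induct)
  case start
  then show ?case by (simp, metis tensor_mat1)
next
  case (alice Ks Ms)
  have 1: "\<forall>K\<in>set (concat (map (\<lambda>j. map (\<lambda>m. tensor m (mat 1) ** (Ks ! j)) (Ms ! j)) [0..<length Ks])).
       \<exists>A B. K = tensor A B"
  proof
    fix K assume "K \<in> set (concat (map (\<lambda>j. map (\<lambda>m. tensor m (mat 1) ** (Ks ! j)) (Ms ! j)) [0..<length Ks]))"
    then obtain j m where j: "j < length Ks" and K: "K = tensor m (mat 1) ** (Ks ! j)" by auto
    obtain A B where "Ks ! j = tensor A B" using alice.IH j nth_mem by blast
    then show "\<exists>A B. K = tensor A B" using K by (auto simp: tensor_mult)
  qed
  have "sum_list (map (\<lambda>K. adj K ** K)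
      (concat (map (\<lambda>j. map (\<lambda>m. tensor m (mat 1) ** (Ks ! j)) (Ms ! j)) [0..<length Ks])))
    = sum_list (map (\<lambda>j. sum_list (map (\<lambda>m. adj (tensor m (mat 1) ** (Ks ! j)) ** (tensor m (mat 1) ** (Ks ! j))) (Ms ! j))) [0..<length Ks])"
    by (simp add: map_concat sum_list_concat' o_def)
  also have "\<dots> = sum_list (map (\<lambda>K. adj K ** K) Ks)"
  proof (rule sum_list_nth_map')
    fix j assume j: "j < length Ks"
    have "sum_list (map (\<lambda>m. adj (tensor m (mat 1) ** (Ks ! j)) ** (tensor m (mat 1) ** (Ks ! j))) (Ms ! j))
       = adj (Ks ! j) ** (tensor (sum_list (map (\<lambda>m. adj m ** m) (Ms ! j))) (mat 1) ** (Ks ! j))"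
      by (simp add: kraus_alice sum_list_mult_left sum_list_mult_right tensor_sum_list_left)
    also have "\<dots> = adj (Ks ! j) ** (Ks ! j)"
      using alice.hyps(3) j by (simp add: local_instrument_def tensor_mat1)
    finally show "sum_list (map (\<lambda>m. adj (tensor m (mat 1) ** (Ks ! j)) ** (tensor m (mat 1) ** (Ks ! j))) (Ms ! j))
       = adj (Ks ! j) ** (Ks ! j)" .
  qed
  finally show ?case using 1 alice.IH by simp
next
  case (bob Ks Ms)
  have 1: "\<forall>K\<in>set (concat (map (\<lambda>j. map (\<lambda>m. tensor (mat 1) m ** (Ks ! j)) (Ms ! j)) [0..<length Ks])).
       \<exists>A B. K = tensor A B"
  proof
    fix K assume "K \<in> set (concat (map (\<lambda>j. map (\<lambda>m. tensor (mat 1) m ** (Ks ! j)) (Ms ! j)) [0..<length Ks]))"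
    then obtain j m where j: "j < length Ks" and K: "K = tensor (mat 1) m ** (Ks ! j)" by auto
    obtain A B where "Ks ! j = tensor A B" using bob.IH j nth_mem by blast
    then show "\<exists>A B. K = tensor A B" using K by (auto simp: tensor_mult)
  qed
  have "sum_list (map (\<lambda>K. adj K ** K)
      (concat (map (\<lambda>j. map (\<lambda>m. tensor (mat 1) m ** (Ks ! j)) (Ms ! j)) [0..<length Ks])))
    = sum_list (map (\<lambda>j. sum_list (map (\<lambda>m. adj (tensor (mat 1) m ** (Ks ! j)) ** (tensor (mat 1) m ** (Ks ! j))) (Ms ! j))) [0..<length Ks])"
    by (simp add: map_concat sum_list_concat' o_def)
  also have "\<dots> = sum_list (map (\<lambda>K. adj K ** K) Ks)"
  proof (rule sum_list_nth_map')
    fix j assume j: "j < length Ks"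
    have "sum_list (map (\<lambda>m. adj (tensor (mat 1) m ** (Ks ! j)) ** (tensor (mat 1) m ** (Ks ! j))) (Ms ! j))
       = adj (Ks ! j) ** (tensor (mat 1) (sum_list (map (\<lambda>m. adj m ** m) (Ms ! j))) ** (Ks ! j))"
      by (simp add: kraus_bob sum_list_mult_left sum_list_mult_right tensor_sum_list_right)
    also have "\<dots> = adj (Ks ! j) ** (Ks ! j)"
      using bob.hyps(3) j by (simp add: local_instrument_def tensor_mat1)
    finally show "sum_list (map (\<lambda>m. adj (tensor (mat 1) m ** (Ks ! j)) ** (tensor (mat 1) m ** (Ks ! j))) (Ms ! j))
       = adj (Ks ! j) ** (Ks ! j)" .
  qed
  finally show ?case using 1 bob.IH by simp
qed

lemma sep_adj_mult_tensor: "separable (adj (tensor (A::qop) (B::qop)) ** tensor A B)"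
proof -
  have "adj (tensor A B) ** tensor A B = tensor (adj A ** A) (adj B ** B)"
    by (simp add: adj_tensor tensor_mult)
  also have "\<dots> = (\<Sum>i'\<in>UNIV. \<Sum>i\<in>UNIV. outer (pv (\<chi> j. cnj (A$i$j)) (\<chi> j. cnj (B$i'$j))))"
    by (simp add: adj_mult_self tensor_sum_left tensor_sum_right tensor_outer)
  also have "separable \<dots>"
    by (intro sep_sum sep_outer_pv)
  finally show ?thesis .
qed

lemma sum_split_pred: "finite S \<Longrightarrow> sum g {j\<in>S. P j} + sum g {j\<in>S. \<not> P j} = sum g S"
proof -
  assume fin: "finite S"
  have "sum g {j\<in>S. P j} + sum g {j\<in>S. \<not> P j} = sum g ({j\<in>S. P j} \<union> {j\<in>S. \<not> P j})"
    using fin by (intro sum.union_disjoint[symmetric]) auto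
  also have "{j\<in>S. P j} \<union> {j\<in>S. \<not> P j} = S" by auto
  finally show ?thesis .
qed

lemma locc_sum_all:
  assumes "locc_kraus Ks"
  shows "(\<Sum>j | j < length Ks \<and> f j. adj (Ks ! j) ** (Ks ! j)) +
         (\<Sum>j | j < length Ks \<and> \<not> f j. adj (Ks ! j) ** (Ks ! j)) = mat 1"
proof -
  have "(\<Sum>j | j < length Ks \<and> f j. adj (Ks ! j) ** (Ks ! j)) +
         (\<Sum>j | j < length Ks \<and> \<not> f j. adj (Ks ! j) ** (Ks ! j)) =
        (\<Sum>j\<in>{..<length Ks}. adj (Ks ! j) ** (Ks ! j))"
    using sum_split_pred[of "{..<length Ks}" "\<lambda>j. adj (Ks ! j) ** (Ks ! j)" f] by simp
  also have "\<dots> = sum_list (map (\<lambda>K. adj K ** K) Ks)"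
    by (simp add: sum_list_sum_nth atLeast0LessThan)
  also have "\<dots> = mat 1" using locc_props[OF assms] by simp
  finally show ?thesis .
qed

lemma locc_sep:
  assumes "locc_kraus Ks"
  shows "separable (\<Sum>j | j < length Ks \<and> f j. adj (Ks ! j) ** (Ks ! j))"
proof (rule sep_sum)
  fix j assume "j \<in> {j. j < length Ks \<and> f j}"
  then have "Ks ! j \<in> set Ks" by simp
  then obtain A B where "Ks ! j = tensor A B" using locc_props[OF assms] by blast
  then show "separable (adj (Ks ! j) ** (Ks ! j))" by (simp add: sep_adj_mult_tensor)
qed

lemma locc_to_sep: "locc_povm2 P1 P2 \<Longrightarrow> sep_povm2 P1 P2"
proof -
  assume "locc_povm2 P1 P2"
  then obtain Ks f where K: "locc_kraus Ks"
    and P1: "P1 = (\<Sum>j | j < length Ks \<and> f j. adj (Ks ! j) ** (Ks ! j))"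
    and P2: "P2 = (\<Sum>j | j < length Ks \<and> \<not> f j. adj (Ks ! j) ** (Ks ! j))"
    unfolding locc_povm2_def by blast
  have s1: "separable P1" using locc_sep[OF K, of f] P1 by simp
  have s2: "separable P2" using locc_sep[OF K, of "\<lambda>j. \<not> f j"] P2 by simp
  have "P1 + P2 = mat 1" using locc_sum_all[OF K, of f] P1 P2 by simp
  then show ?thesis using s1 s2 by (simp add: sep_povm2_def povm2_def sep_psd)
qed


definition cjv :: "complex^'n \<Rightarrow> complex^'n" where "cjv v = (\<chi> i. cnj (v$i))"

lemma cjv_nth[simp]: "cjv v $ i = cnj (v $ i)" by (simp add: cjv_def)
lemma cjv_cjv[simp]: "cjv (cjv v) = v" by (simp add: vec_eq_iff)
lemma cjv_add: "cjv (x + y) = cjv x + cjv y" by (simp add: vec_eq_iff)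
lemma cjv_scale: "cjv (c *s x) = cnj c *s cjv x" by (simp add: vec_eq_iff)
lemma cjv_zero[simp]: "cjv 0 = 0" by (simp add: vec_eq_iff)
lemma cjv_sum: "cjv (sum f S) = (\<Sum>x\<in>S. cjv (f x))"
  by (simp add: vec_eq_iff sum_component)
lemma inj_cjv: "inj cjv" by (metis cjv_cjv injI)

lemma cjv_span: "x \<in> vec.span B \<Longrightarrow> cjv x \<in> vec.span (cjv ` B)"
proof -
  assume x: "x \<in> vec.span B"
  have s: "vec.subspace {x. cjv x \<in> vec.span (cjv ` B)}"
    by (auto simp: vec.subspace_def cjv_add cjv_scale vec.span_add vec.span_scale vec.span_zero)
  have "\<And>x. x \<in> B \<Longrightarrow> x \<in> {x. cjv x \<in> vec.span (cjv ` B)}"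
    by (auto intro: vec.span_base)
  then show ?thesis using vec.span_subspace_induct[OF x s] by blast
qed

lemma cjv_indep: "vec.independent B \<Longrightarrow> vec.independent (cjv ` B)"
proof -
  assume ind: "vec.independent B"
  then have fin: "finite B" and h: "\<And>c. (\<Sum>v\<in>B. c v *s v) = 0 \<Longrightarrow> (\<forall>v\<in>B. c v = 0)"
    unfolding vec.independent_explicit by auto
  have "\<forall>w\<in>cjv ` B. c w = 0" if c: "(\<Sum>w\<in>cjv ` B. c w *s w) = 0" for c
  proof -
    have "(\<Sum>v\<in>B. c (cjv v) *s cjv v) = 0"
      using c by (simp add: sum.reindex inj_on_subset[OF inj_cjv])
    then have "cjv (\<Sum>v\<in>B. c (cjv v) *s cjv v) = 0" by simp
    then have "(\<Sum>v\<in>B. cnj (c (cjv v)) *s v) = 0" by (simp add: cjv_sum cjv_scale)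
    then have "\<forall>v\<in>B. cnj (c (cjv v)) = 0" by (rule h)
    then show ?thesis by auto
  qed
  then show ?thesis unfolding vec.independent_explicit using fin by auto
qed

lemma dim_cjv: "vec.dim (cjv ` X) = vec.dim X"
proof -
  obtain B where B: "B \<subseteq> X" "vec.independent B" "X \<subseteq> vec.span B" "card B = vec.dim X"
    using vec.basis_exists by blast
  have "card (cjv ` B) = vec.dim (cjv ` X)"
    apply (rule vec.basis_card_eq_dim)
      using B(1) apply blast
     using B(3) apply (auto intro: cjv_span)[1]
    using cjv_indep[OF B(2)] .
  moreover have "card (cjv ` B) = card B"
    by (rule card_image) (rule inj_on_subset[OF inj_cjv], simp)
  ultimately show ?thesis using B by simp
qed

lemma rows_adj: "rows (adj A) = cjv ` columns A"
proof -
  have "row i (adj A) = cjv (column i A)" for i by (simp add: vec_eq_iff row_def column_def)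
  then show ?thesis by (auto simp: rows_def columns_def)
qed

lemma subspace_support: "vec.subspace (support (A::complex^'n^'n))"
proof (rule vec.subspaceI)
  show "0 \<in> support A" unfolding support_def by (rule range_eqI[of _ _ 0]) simp
  show "x + y \<in> support A" if "x \<in> support A" "y \<in> support A" for x y
    using that unfolding support_def by (auto, metis matrix_vector_right_distrib rangeI)
  show "c *s x \<in> support A" if "x \<in> support A" for c x
    using that unfolding support_def by (auto, metis mv_scale_right rangeI)
qed

lemma column_mv: "column i A = A *v axis i 1"
  by (simp add: vec_eq_iff column_def matrix_vector_mult_def axis_def if_distrib sum.delta cong: if_cong)

lemma support_span_columns: "support (A::complex^'n^'n) = vec.span (columns A)"
proof
  show "support A \<subseteq> vec.span (columns A)"
  proof
    fix y assume "y \<in> support A"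
    then obtain x where y: "y = A *v x" by (auto simp: support_def)
    have "A *v x = (\<Sum>i\<in>UNIV. (x$i) *s column i A)" by (rule matrix_mult_sum)
    also have "\<dots> \<in> vec.span (columns A)"
      by (intro vec.span_sum vec.span_scale vec.span_base) (auto simp: columns_def)
    finally show "y \<in> vec.span (columns A)" using y by simp
  qed
  show "vec.span (columns A) \<subseteq> support A"
    apply (rule vec.span_minimal)
     apply (auto simp: columns_def column_mv support_def)[1]
    by (rule subspace_support)
qed

lemma rank_dim_support: "psd (A::complex^'n^'n) \<Longrightarrow> rank A = vec.dim (support A)"
proof -
  assume "psd A"
  then have "adj A = A" by (rule psd_herm)
  then have "rank A = vec.dim (rows (adj A))" by (simp add: row_rank_def_gen)
  also have "\<dots> = vec.dim (columns A)" by (simp add: rows_adj dim_cjv)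
  also have "\<dots> = vec.dim (support A)" by (simp add: support_span_columns)
  finally show ?thesis .
qed

lemma decomp_sum:
  fixes S T :: "(complex^'n) set"
  assumes "vec.subspace S" "vec.subspace T" "vec.dim S + vec.dim T = CARD('n)"
    "\<forall>x\<in>S. \<forall>y\<in>T. cinn x y = 0"
  shows "\<exists>s\<in>S. \<exists>t\<in>T. v = s + t"
proof -
  let ?ST = "{x + y |x y. x \<in> S \<and> y \<in> T}"
  have int: "S \<inter> T = {0}"
  proof
    show "S \<inter> T \<subseteq> {0}"
    proof
      fix x assume "x \<in> S \<inter> T"
      then have "cinn x x = 0" using assms(4) by blast
      then show "x \<in> {0}" by (simp add: cinn_self_eq0)
    qed
    show "{0} \<subseteq> S \<inter> T" using vec.subspace_0[OF assms(1)] vec.subspace_0[OF assms(2)] by simp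
  qed
  have d0: "vec.dim ({0}::(complex^'n) set) = 0"
    using vec.dim_span[of "{}"] by simp
  have "vec.dim ?ST + vec.dim (S \<inter> T) = vec.dim S + vec.dim T"
    by (rule vec.dim_sums_Int[OF assms(1,2)])
  then have "vec.dim ?ST = CARD('n)" using int assms(3) d0 by simp
  then have "vec.dim ?ST \<ge> vec.dim (UNIV :: (complex^'n) set)" by (simp add: card_cart_basis)
  then have "?ST = UNIV"
    using vec.subspace_dim_equal[OF vec.subspace_sums[OF assms(1,2)] vec.subspace_UNIV] by simp
  then have "v \<in> ?ST" by simp
  then show ?thesis by blast
qed

lemma orth_fix: "orth_proj_onto Q S \<Longrightarrow> s \<in> S \<Longrightarrow> Q *v s = s"
proof -
  assume o: "orth_proj_onto Q S" and s: "s \<in> S"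
  then obtain w where w: "s = Q *v w" by (auto simp: orth_proj_onto_def support_def)
  have "Q *v s = (Q ** Q) *v w" by (simp add: w matrix_vector_mul_assoc)
  then show ?thesis using o w by (simp add: orth_proj_onto_def)
qed

lemma orth_range: "orth_proj_onto Q S \<Longrightarrow> Q *v v \<in> S"
  by (auto simp: orth_proj_onto_def support_def)

lemma orth_kill: "orth_proj_onto Q S \<Longrightarrow> (\<forall>s\<in>S. cinn s t = 0) \<Longrightarrow> Q *v t = 0"
proof -
  assume o: "orth_proj_onto Q S" and h: "\<forall>s\<in>S. cinn s t = 0"
  have "cinn (Q *v t) (Q *v t) = cinn t (adj Q *v (Q *v t))" by (simp add: cinn_adj)
  also have "\<dots> = cinn t (Q *v t)"
    using o by (simp add: orth_proj_onto_def matrix_vector_mul_assoc)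
  also have "\<dots> = cnj (cinn (Q *v t) t)" by (simp add: cinn_cnj)
  also have "\<dots> = 0" using h orth_range[OF o] by simp
  finally show ?thesis by (simp add: cinn_self_eq0)
qed

lemma proj_unique:
  assumes o: "orth_proj_onto Q S" and h: "adj P = P" "\<forall>v. P *v v \<in> S" "\<forall>s\<in>S. P *v s = s"
  shows "P = Q"
proof -
  have 1: "P ** Q = Q"
    unfolding matrix_eq using h(3) orth_range[OF o] by (simp add: matrix_vector_mul_assoc[symmetric])
  have 2: "Q ** P = P"
    unfolding matrix_eq using h(2) orth_fix[OF o] by (simp add: matrix_vector_mul_assoc[symmetric])
  have "adj Q = Q" using o by (simp add: orth_proj_onto_def)
  have "P = adj (Q ** P)" using 2 h(1) by simp
  also have "\<dots> = P ** Q" using h(1) \<open>adj Q = Q\<close> by (simp add: adj_mult)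
  finally show ?thesis using 1 by simp
qed

lemma matrix_mult_outer: "(R::complex^'n^'m) ** outer x = (\<chi> i j. (R *v x)$i * cnj (x$j))"
  by (simp add: vec_eq_iff matrix_matrix_mult_def matrix_vector_mult_def outer_def sum_distrib_right mult.assoc)

lemma decomp_trace_zero:
  fixes x :: "nat \<Rightarrow> complex^'n"
  assumes c: "\<forall>k<n. 0 \<le> c k" and R: "psd R" and tr: "mtrace ((\<Sum>k<n. c k *\<^sub>R outer (x k)) ** R) = 0"
  shows "\<forall>k<n. c k \<noteq> 0 \<longrightarrow> R *v x k = 0"
proof -
  have "mtrace ((\<Sum>k<n. c k *\<^sub>R outer (x k)) ** R) = (\<Sum>k<n. of_real (c k) * cinn (x k) (R *v x k))"
    by (simp add: matrix_mult_sum_left mtrace_sum scalar_matrix_assoc[symmetric] mtrace_scaleR mtrace_outer_mult)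
  then have "Re (\<Sum>k<n. of_real (c k) * cinn (x k) (R *v x k)) = 0"
    using tr by simp
  then have "(\<Sum>k<n. c k * Re (cinn (x k) (R *v x k))) = 0"
    by (simp add: Re_sum)
  moreover have nn: "\<forall>k\<in>{..<n}. 0 \<le> c k * Re (cinn (x k) (R *v x k))"
    using c R unfolding psd_def by auto
  ultimately have z: "\<forall>k\<in>{..<n}. c k * Re (cinn (x k) (R *v x k)) = 0"
    by (subst sum_nonneg_eq_0_iff[symmetric]) auto
  show ?thesis
  proof (intro allI impI)
    fix k assume k: "k < n" and ck: "c k \<noteq> 0"
    then have "Re (cinn (x k) (R *v x k)) = 0" using z by auto
    moreover have "Im (cinn (x k) (R *v x k)) = 0" using R unfolding psd_def by auto
    ultimately have "cinn (x k) (R *v x k) = 0" by (simp add: complex_eq_iff)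
    then show "R *v x k = 0" using psd_zero_form[OF R] by blast
  qed
qed

lemma sep_trace_zero:
  assumes "separable P" "psd R" "mtrace (P ** R) = 0" shows "R ** P = 0"
proof -
  obtain n c x where h: "\<forall>k<(n::nat). 0 \<le> c k \<and> (\<exists>a b. x k = pv a b \<and> norm (a::qvec) = 1 \<and> norm (b::qvec) = 1)"
    and P: "P = (\<Sum>k<n. c k *\<^sub>R outer (x k))"
    using sep_decomp[OF assms(1)] by blast
  have z: "\<forall>k<n. c k \<noteq> 0 \<longrightarrow> R *v x k = 0"
    using decomp_trace_zero[of n c R x] h assms(2,3) P by auto
  have "R ** P = (\<Sum>k<n. c k *\<^sub>R (R ** outer (x k)))"
    by (simp add: P matrix_mult_sum_right matrix_scalar_ac scalar_matrix_assoc)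
  also have "\<dots> = 0"
  proof (rule sum.neutral, rule ballI)
    fix k assume "k \<in> {..<n}"
    then show "c k *\<^sub>R (R ** outer (x k)) = 0"
      using z by (cases "c k = 0") (auto simp: matrix_mult_outer vec_eq_iff)
  qed
  finally show ?thesis .
qed


lemma sep_to_proj:
  fixes \<rho>1 \<rho>2 P1 P2 Q1 Q2 :: qqop
  assumes r1: "psd \<rho>1" and r2: "psd \<rho>2"
    and dec: "\<And>v. \<exists>s\<in>support \<rho>1. \<exists>t\<in>support \<rho>2. v = s + t"
    and orth: "\<forall>x\<in>support \<rho>1. \<forall>y\<in>support \<rho>2. cinn x y = 0"
    and sp: "sep_povm2 P1 P2" and pd: "perfectly_distinguishes P1 P2 \<rho>1 \<rho>2"
    and q1: "orth_proj_onto Q1 (support \<rho>1)" and q2: "orth_proj_onto Q2 (support \<rho>2)"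
  shows "separable Q1 \<and> separable Q2"
proof -
  have s1: "separable P1" and s2: "separable P2" and p1: "psd P1" and p2: "psd P2"
    and sum: "P1 + P2 = mat 1"
    using sp by (auto simp: sep_povm2_def povm2_def)
  have "\<rho>2 ** P1 = 0" using sep_trace_zero[OF s1 r2] pd by (simp add: perfectly_distinguishes_def)
  then have z1: "P1 ** \<rho>2 = 0" using psd_herm[OF p1] psd_herm[OF r2] adj_mult[of \<rho>2 P1] by simp
  have "\<rho>1 ** P2 = 0" using sep_trace_zero[OF s2 r1] pd by (simp add: perfectly_distinguishes_def)
  then have z2: "P2 ** \<rho>1 = 0" using psd_herm[OF p2] psd_herm[OF r1] adj_mult[of \<rho>1 P2] by simp
  have P2eq: "P2 = mat 1 - P1" using sum by (simp add: algebra_simps)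
  have P1t: "P1 *v t = 0" if tt: "t \<in> support \<rho>2" for t
  proof -
    obtain w where "t = \<rho>2 *v w" using tt unfolding support_def by blast
    then show ?thesis using z1 by (simp add: matrix_vector_mul_assoc)
  qed
  have P2s: "P2 *v s = 0" if ss: "s \<in> support \<rho>1" for s
  proof -
    obtain w where "s = \<rho>1 *v w" using ss unfolding support_def by blast
    then show ?thesis using z2 by (simp add: matrix_vector_mul_assoc)
  qed
  have "P1 *v v = Q1 *v v \<and> P2 *v v = Q2 *v v" for v
  proof -
    obtain s t where s: "s \<in> support \<rho>1" and t: "t \<in> support \<rho>2" and v: "v = s + t"
      using dec by blast
    have P1s: "P1 *v s = s" using P2s[OF s] P2eq by (simp add: matrix_vector_mult_diff_rdistrib)
    have P2t: "P2 *v t = t" using P1t[OF t] P2eq by (simp add: matrix_vector_mult_diff_rdistrib)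
    have Q1s: "Q1 *v s = s" by (rule orth_fix[OF q1 s])
    have Q2t: "Q2 *v t = t" by (rule orth_fix[OF q2 t])
    have Q1t: "Q1 *v t = 0" using orth t by (intro orth_kill[OF q1]) auto
    have Q2s: "Q2 *v s = 0"
    proof (rule orth_kill[OF q2], intro ballI)
      fix y assume "y \<in> support \<rho>2"
      then have "cinn s y = 0" using orth s by auto
      then show "cinn y s = 0" by (metis cinn_cnj complex_cnj_zero)
    qed
    show ?thesis
      using P1s P2t Q1s Q2t Q1t Q2s P1t[OF t] P2s[OF s] v
      by (simp add: matrix_vector_right_distrib)
  qed
  then have "P1 = Q1" "P2 = Q2" by (simp_all add: matrix_eq)
  then show ?thesis using s1 s2 by simp
qed

lemma dim_support_2:
  fixes \<rho> :: qqop
  assumes "density \<rho>" "rank \<rho> = 2"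
  shows "vec.dim (support \<rho>) = 2"
  using rank_dim_support[of \<rho>] assms by (simp add: density_def)

lemma card_qq: "CARD(2 \<times> 2) = 4" by simp


lemma cinn_norm: "cinn a a = complex_of_real ((norm a)\<^sup>2)"
proof -
  have "(norm a)\<^sup>2 = (\<Sum>i\<in>UNIV. (cmod (a$i))\<^sup>2)"
    unfolding norm_vec_def L2_set_def by (simp add: sum_nonneg)
  then show ?thesis by (simp add: cinn_self)
qed

lemma unit_cinn: "norm a = 1 \<Longrightarrow> cinn a a = 1"
  by (simp add: cinn_norm)

lemma pv_unit: "cinn a a = 1 \<Longrightarrow> cinn b b = 1 \<Longrightarrow> cinn (pv a b) (pv a b) = 1"
  by (simp add: cinn_pv)

lemma unit_nz: "cinn a a = 1 \<Longrightarrow> a \<noteq> 0"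
  by auto

lemma outer_idem: "cinn a a = 1 \<Longrightarrow> outer a ** outer a = outer a"
  by (simp add: matrix_eq matrix_vector_mul_assoc[symmetric] outer_mv cinn_scale_right)

lemma span2: "y \<in> vec.span {x, x'} \<longleftrightarrow> (\<exists>l m. y = l *s x + m *s x')"
proof
  assume "y \<in> vec.span {x, x'}"
  then obtain k where "y - k *s x \<in> vec.span {x'}" using vec.span_breakdown_eq by blast
  then obtain m where m: "y - k *s x = m *s x'" by (auto simp: vec.span_singleton)
  have "y = k *s x + (y - k *s x)" by simp
  then have "y = k *s x + m *s x'" using m by simp
  then show "\<exists>l m. y = l *s x + m *s x'" by blast
next
  assume "\<exists>l m. y = l *s x + m *s x'"
  then obtain l m where y: "y = l *s x + m *s x'" by blast
  have "y - l *s x = m *s x'" using y by simp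
  then have "y - l *s x \<in> vec.span {x'}" by (auto simp: vec.span_singleton)
  then show "y \<in> vec.span {x, x'}" using vec.span_breakdown_eq by blast
qed

lemma fix_span2:
  assumes "M *v x = x" "M *v x' = x'" "y \<in> vec.span {x, x'}"
  shows "(M::complex^'n^'n) *v y = y"
proof -
  obtain l m where "y = l *s x + m *s x'" using assms(3) span2 by blast
  then show ?thesis using assms(1,2) by (simp add: matrix_vector_right_distrib mv_scale_right)
qed

definition det2 :: "qvec \<Rightarrow> qvec \<Rightarrow> complex" where
  "det2 a b = a$1 * b$2 - a$2 * b$1"

lemma vec2_eq: "(v::'a^2) = w \<longleftrightarrow> v$1 = w$1 \<and> v$2 = w$2"
  by (simp add: vec_eq_iff forall_2)

lemma det2_zero:
  assumes "a \<noteq> 0" "det2 a b = 0" shows "\<exists>s. b = s *s a"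
proof (cases "a$1 = 0")
  case True
  then have "a$2 \<noteq> 0" using assms(1) by (auto simp: vec2_eq)
  then show ?thesis using assms(2) True
    by (intro exI[of _ "b$2 / a$2"]) (auto simp: vec2_eq det2_def field_simps)
next
  case False
  then show ?thesis using assms(2)
    by (intro exI[of _ "b$1 / a$1"]) (auto simp: vec2_eq det2_def field_simps)
qed

lemma det2_span:
  assumes "det2 a b \<noteq> 0" shows "\<exists>l m. w = l *s a + m *s b"
proof -
  define d where "d = det2 a b"
  have d0: "d \<noteq> 0" using assms by (simp add: d_def)
  define x where "x = w$1 * b$2 - w$2 * b$1"
  define y where "y = a$1 * w$2 - a$2 * w$1"
  have e1: "x * a$1 + y * b$1 = w$1 * d" by (simp add: x_def y_def d_def det2_def algebra_simps)
  have e2: "x * a$2 + y * b$2 = w$2 * d" by (simp add: x_def y_def d_def det2_def algebra_simps)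
  have "(x/d) * a$1 + (y/d) * b$1 = (x * a$1 + y * b$1) / d" by (simp add: add_divide_distrib)
  also have "\<dots> = w$1" using e1 d0 by simp
  finally have c1: "(x/d) * a$1 + (y/d) * b$1 = w$1" .
  have "(x/d) * a$2 + (y/d) * b$2 = (x * a$2 + y * b$2) / d" by (simp add: add_divide_distrib)
  also have "\<dots> = w$2" using e2 d0 by simp
  finally have c2: "(x/d) * a$2 + (y/d) * b$2 = w$2" .
  have "w = (x/d) *s a + (y/d) *s b" using c1 c2 by (simp add: vec2_eq)
  then show ?thesis by blast
qed

lemma det2_self_scale: "det2 a (s *s a) = 0"
  by (simp add: det2_def)

lemma orthonormal_complete:
  fixes a a' :: qvec
  assumes "cinn a a = 1" "cinn a' a' = 1" "cinn a a' = 0"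
  shows "outer a + outer a' = mat 1"
proof -
  have d: "det2 a a' \<noteq> 0"
  proof
    assume "det2 a a' = 0"
    then obtain s where s: "a' = s *s a" using det2_zero[OF unit_nz[OF assms(1)]] by auto
    then have "cinn a a' = s" using assms(1) by (simp add: cinn_scale_right)
    then have "s = 0" using assms(3) by simp
    then show False using s assms(2) by simp
  qed
  have "(outer a + outer a') *v w = w" for w
  proof -
    obtain l m where w: "w = l *s a + m *s a'" using det2_span[OF d] by blast
    have "cinn a' a = 0" using assms(3) cinn_cnj[of a a'] by simp
    then have "cinn a w = l" "cinn a' w = m"
      using assms by (simp_all add: w cinn_add_right cinn_scale_right)
    then show ?thesis by (simp add: matrix_vector_mult_add_rdistrib outer_mv w)
  qed
  then show ?thesis by (simp add: matrix_eq)
qed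

definition perp :: "qvec \<Rightarrow> qvec" where
  "perp a = (\<chi> i. if i = 1 then - cnj (a$2) else cnj (a$1))"

lemma perp_nth: "perp a $ 1 = - cnj (a$2)" "perp a $ 2 = cnj (a$1)"
  by (simp_all add: perp_def)

lemma cinn2: "cinn (a::qvec) b = cnj (a$1) * b$1 + cnj (a$2) * b$2"
  by (simp add: cinn_def sum_2)

lemma perp_unit: "cinn (perp a) (perp a) = cinn a a"
  by (simp add: cinn2 perp_nth)

lemma perp_orth: "cinn a (perp a) = 0"
  by (simp add: cinn2 perp_nth)

lemma unit_perp_complete: "cinn (a::qvec) a = 1 \<Longrightarrow> outer a + outer (perp a) = mat 1"
  by (rule orthonormal_complete) (simp_all add: perp_unit perp_orth)

definition det4 :: "qqvec \<Rightarrow> complex" where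
  "det4 z = z$(1,1) * z$(2,2) - z$(1,2) * z$(2,1)"

lemma det4_pv: "det4 (pv p q) = 0"
  by (simp add: det4_def)

lemma pv_comb_comp: "(l *s pv a b + m *s pv a' b') $ (i,j) = l * (a$i * b$j) + m * (a'$i * b'$j)"
  by simp

lemma det4_comb: "det4 (l *s pv a b + m *s pv a' b') = l * m * det2 a a' * det2 b b'"
  unfolding det4_def pv_comb_comp det2_def by algebra

lemma product_in_span2:
  assumes "pv p q = l *s pv a b + m *s pv a' b'" "det2 a a' \<noteq> 0" "det2 b b' \<noteq> 0"
  shows "l = 0 \<or> m = 0"
proof -
  have "l * m * det2 a a' * det2 b b' = det4 (l *s pv a b + m *s pv a' b')" by (rule det4_comb[symmetric])
  also have "\<dots> = det4 (pv p q)" by (simp only: assms(1))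
  also have "\<dots> = 0" by (rule det4_pv)
  finally have "l * m * det2 a a' * det2 b b' = 0" .
  then show ?thesis using assms(2,3) by simp
qed


lemma locc_povm2_intro:
  assumes "locc_kraus Ks" "(\<Sum>j | j < length Ks \<and> f j. adj (Ks ! j) ** (Ks ! j)) = P"
  shows "locc_povm2 P (mat 1 - P)"
proof -
  have "P + (\<Sum>j | j < length Ks \<and> \<not> f j. adj (Ks ! j) ** (Ks ! j)) = mat 1"
    using locc_sum_all[OF assms(1), of f] assms(2) by simp
  then have e: "(\<Sum>j | j < length Ks \<and> \<not> f j. adj (Ks ! j) ** (Ks ! j)) = mat 1 - P"
    by (simp add: algebra_simps)
  show ?thesis unfolding locc_povm2_def
    by (rule exI[of _ Ks], rule exI[of _ f]) (use assms(1) assms(2)[symmetric] e[symmetric] in auto)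
qed

lemma sum_set_0: "0 < n \<Longrightarrow> (\<Sum>j | j < n \<and> j = 0. g j) = g (0::nat)"
proof -
  assume "0 < n"
  then have "{j. j < n \<and> j = 0} = {0::nat}" by auto
  then show ?thesis by simp
qed

lemma local_instr2:
  assumes "cinn (a::qvec) a = 1" "cinn a' a' = 1" "cinn a a' = 0"
  shows "local_instrument [outer a, outer a']"
  unfolding local_instrument_def using assms
  by (simp add: outer_idem orthonormal_complete)

lemma locc_alice_start:
  fixes m1 m2 :: qop
  assumes "local_instrument [m1, m2]"
  shows "locc_kraus [tensor m1 (mat 1), tensor m2 (mat 1)]"
proof -
  have "locc_kraus (concat (map (\<lambda>j. map (\<lambda>m. tensor m (mat 1) ** ([mat 1] ! j)) ([[m1, m2]] ! j))
                                         [0..<length [mat 1]]))"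
    using locc_kraus.alice[OF locc_kraus.start, of "[[m1, m2]]"] assms by simp
  then show ?thesis by simp
qed

lemma locc_bob_start:
  fixes m1 m2 :: qop
  assumes "local_instrument [m1, m2]"
  shows "locc_kraus [tensor (mat 1) m1, tensor (mat 1) m2]"
proof -
  have "locc_kraus (concat (map (\<lambda>j. map (\<lambda>m. tensor (mat 1) m ** ([mat 1] ! j)) ([[m1, m2]] ! j))
                                         [0..<length [mat 1]]))"
    using locc_kraus.bob[OF locc_kraus.start, of "[[m1, m2]]"] assms by simp
  then show ?thesis by simp
qed

lemma all_less_2: "(\<forall>j<Suc (Suc 0). P j) \<longleftrightarrow> P 0 \<and> P (Suc 0)"
  by (auto simp: less_Suc_eq)

lemma upt_2: "[0..<2] = [0, 1::nat]" by (simp add: upt_rec)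

lemma locc_alice_bob:
  fixes m1 m2 n1 n2 n3 n4 :: qop
  assumes "local_instrument [m1, m2]" "local_instrument [n1, n2]" "local_instrument [n3, n4]"
  shows "locc_kraus [tensor m1 n1, tensor m1 n2, tensor m2 n3, tensor m2 n4]"
proof -
  have "locc_kraus (concat (map (\<lambda>j. map (\<lambda>m. tensor (mat 1) m ** ([tensor m1 (mat 1), tensor m2 (mat 1)] ! j))
          ([[n1, n2], [n3, n4]] ! j)) [0..<length [tensor m1 (mat 1), tensor m2 (mat 1)]]))"
    using locc_kraus.bob[OF locc_alice_start[OF assms(1)], of "[[n1, n2], [n3, n4]]"] assms(2,3)
    by (simp add: all_less_2)
  then show ?thesis by (simp add: upt_2 tensor_mult)
qed

lemma locc_bob_alice:
  fixes m1 m2 n1 n2 m3 m4 :: qop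
  assumes "local_instrument [n1, n2]" "local_instrument [m1, m2]" "local_instrument [m3, m4]"
  shows "locc_kraus [tensor m1 n1, tensor m2 n1, tensor m3 n2, tensor m4 n2]"
proof -
  have "locc_kraus (concat (map (\<lambda>j. map (\<lambda>m. tensor m (mat 1) ** ([tensor (mat 1) n1, tensor (mat 1) n2] ! j))
          ([[m1, m2], [m3, m4]] ! j)) [0..<length [tensor (mat 1) n1, tensor (mat 1) n2]]))"
    using locc_kraus.alice[OF locc_bob_start[OF assms(1)], of "[[m1, m2], [m3, m4]]"] assms(2,3)
    by (simp add: all_less_2)
  then show ?thesis by (simp add: upt_2 tensor_mult)
qed

lemma sum_set_02: "(\<Sum>j | j < 4 \<and> (j = 0 \<or> j = 2). g j) = g 0 + g (2::nat)"
proof -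
  have "{j. j < 4 \<and> (j = 0 \<or> j = 2)} = {0, 2::nat}" by auto
  then show ?thesis by simp
qed

lemma proto_alice:
  assumes "cinn (a::qvec) a = 1"
  shows "locc_povm2 (tensor (outer a) (mat 1)) (mat 1 - tensor (outer a) (mat 1))"
proof -
  have li: "local_instrument [outer a, outer (perp a)]"
    using assms by (intro local_instr2) (simp_all add: perp_unit perp_orth)
  show ?thesis
  proof (rule locc_povm2_intro[OF locc_alice_start[OF li], of "\<lambda>j. j = 0"])
    show "(\<Sum>j | j < length [tensor (outer a) (mat 1), tensor (outer (perp a)) (mat 1)] \<and> j = 0.
        adj ([tensor (outer a) (mat 1), tensor (outer (perp a)) (mat 1)] ! j) **
        [tensor (outer a) (mat 1), tensor (outer (perp a)) (mat 1)] ! j) = tensor (outer a) (mat 1)"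
      using assms by (subst sum_set_0) (simp_all add: adj_tensor tensor_mult outer_idem)
  qed
qed

lemma proto_bob:
  assumes "cinn (b::qvec) b = 1"
  shows "locc_povm2 (tensor (mat 1) (outer b)) (mat 1 - tensor (mat 1) (outer b))"
proof -
  have li: "local_instrument [outer b, outer (perp b)]"
    using assms by (intro local_instr2) (simp_all add: perp_unit perp_orth)
  show ?thesis
  proof (rule locc_povm2_intro[OF locc_bob_start[OF li], of "\<lambda>j. j = 0"])
    show "(\<Sum>j | j < length [tensor (mat 1) (outer b), tensor (mat 1) (outer (perp b))] \<and> j = 0.
        adj ([tensor (mat 1) (outer b), tensor (mat 1) (outer (perp b))] ! j) **
        [tensor (mat 1) (outer b), tensor (mat 1) (outer (perp b))] ! j) = tensor (mat 1) (outer b)"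
      using assms by (subst sum_set_0) (simp_all add: adj_tensor tensor_mult outer_idem)
  qed
qed

lemma proto_alice_bob:
  fixes a a' b b' :: qvec
  assumes "cinn a a = 1" "cinn a' a' = 1" "cinn a a' = 0" "cinn b b = 1" "cinn b' b' = 1"
  shows "locc_povm2 (outer (pv a b) + outer (pv a' b')) (mat 1 - (outer (pv a b) + outer (pv a' b')))"
proof -
  have l1: "local_instrument [outer a, outer a']" using assms by (intro local_instr2)
  have l2: "local_instrument [outer b, outer (perp b)]"
    using assms by (intro local_instr2) (simp_all add: perp_unit perp_orth)
  have l3: "local_instrument [outer b', outer (perp b')]"
    using assms by (intro local_instr2) (simp_all add: perp_unit perp_orth)
  let ?Ks = "[tensor (outer a) (outer b), tensor (outer a) (outer (perp b)),
             tensor (outer a') (outer b'), tensor (outer a') (outer (perp b'))]"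
  show ?thesis
  proof (rule locc_povm2_intro[OF locc_alice_bob[OF l1 l2 l3], of "\<lambda>j. j = 0 \<or> j = 2"])
    have "length ?Ks = 4" by simp
    then show "(\<Sum>j | j < length ?Ks \<and> (j = 0 \<or> j = 2). adj (?Ks ! j) ** (?Ks ! j))
        = outer (pv a b) + outer (pv a' b')"
      using assms pv_unit[of a b] pv_unit[of a' b']
      by (simp only: sum_set_02) (simp add: adj_tensor tensor_mult outer_idem tensor_outer)
  qed
qed

lemma proto_bob_alice:
  fixes a a' b b' :: qvec
  assumes "cinn a a = 1" "cinn a' a' = 1" "cinn b b' = 0" "cinn b b = 1" "cinn b' b' = 1"
  shows "locc_povm2 (outer (pv a b) + outer (pv a' b')) (mat 1 - (outer (pv a b) + outer (pv a' b')))"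
proof -
  have l1: "local_instrument [outer b, outer b']" using assms by (intro local_instr2)
  have l2: "local_instrument [outer a, outer (perp a)]"
    using assms by (intro local_instr2) (simp_all add: perp_unit perp_orth)
  have l3: "local_instrument [outer a', outer (perp a')]"
    using assms by (intro local_instr2) (simp_all add: perp_unit perp_orth)
  let ?Ks = "[tensor (outer a) (outer b), tensor (outer (perp a)) (outer b),
             tensor (outer a') (outer b'), tensor (outer (perp a')) (outer b')]"
  show ?thesis
  proof (rule locc_povm2_intro[OF locc_bob_alice[OF l1 l2 l3], of "\<lambda>j. j = 0 \<or> j = 2"])
    have "length ?Ks = 4" by simp
    then show "(\<Sum>j | j < length ?Ks \<and> (j = 0 \<or> j = 2). adj (?Ks ! j) ** (?Ks ! j))
        = outer (pv a b) + outer (pv a' b')"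
      using assms pv_unit[of a b] pv_unit[of a' b']
      by (simp only: sum_set_02) (simp add: adj_tensor tensor_mult outer_idem tensor_outer)
  qed
qed


lemma indep2:
  assumes "x \<noteq> 0" "x' \<notin> vec.span {x}"
  shows "vec.independent {x, x'}" "card {x, x'} = 2"
proof -
  have ne: "x' \<noteq> x" using assms(2) vec.span_base[of x "{x}"] by auto
  have i1: "vec.independent {x}" using assms(1) by (simp add: vec.independent_insert)
  have "{x, x'} = insert x' {x}" by auto
  then show "vec.independent {x, x'}" using i1 assms(2) ne by (simp add: vec.independent_insert)
  show "card {x, x'} = 2" using ne by simp
qed

lemma span2_eq_subspace:
  assumes sub: "vec.subspace S" and d: "vec.dim S = 2" and x: "x \<in> S" "x' \<in> S"
    and nz: "x \<noteq> 0" and ni: "x' \<notin> vec.span {x}"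
  shows "vec.span {x, x'} = S"
proof -
  have "vec.dim (vec.span {x, x'}) = 2"
    using indep2[OF nz ni] by (simp add: vec.dim_eq_card_independent)
  moreover have "vec.span {x, x'} \<subseteq> S" using x sub by (intro vec.span_minimal) auto
  ultimately show ?thesis
    using vec.subspace_dim_equal[OF vec.subspace_span sub] d by simp
qed

lemma exists_proj_dim2:
  fixes S :: "(complex^'n) set"
  assumes sub: "vec.subspace S" and d: "vec.dim S = 2"
  shows "\<exists>Q. orth_proj_onto Q S"
proof -
  obtain B where B: "B \<subseteq> S" "vec.independent B" "S \<subseteq> vec.span B" "card B = 2"
    using vec.basis_exists[of S] d by metis
  then obtain u v where uv: "B = {u, v}" "u \<noteq> v" by (meson card_2_iff)
  have u0: "u \<noteq> 0" using B(2) uv vec.dependent_zero by blast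
  have "insert v {u} = B" using uv by auto
  then have vu: "v \<notin> vec.span {u}" using B(2) uv(2) by (metis vec.independent_insert singletonD)
  have uS: "u \<in> S" and vS: "v \<in> S" using B uv by auto
  define nu where "nu = cinn u u"
  have nu0: "nu \<noteq> 0" using u0 by (simp add: nu_def cinn_self_eq0)
  have nur: "nu = of_real (Re nu)" by (simp add: nu_def complex_eq_iff cinn_self_Im)
  define v' where "v' = v - (cinn u v / nu) *s u"
  have ov: "cinn u v' = 0" using nu0 by (simp add: v'_def cinn_diff_right cinn_scale_right nu_def)
  have ov': "cinn v' u = 0" using ov cinn_cnj[of u v'] by simp
  have v'0: "v' \<noteq> 0"
  proof
    assume "v' = 0"
    then have "v = (cinn u v / nu) *s u" by (simp add: v'_def)
    then have "v \<in> vec.span {u}" by (metis vec.span_base vec.span_scale singletonI)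
    then show False using vu by simp
  qed
  have v'S: "v' \<in> S" unfolding v'_def using uS vS sub
    by (simp add: vec.subspace_diff vec.subspace_scale)
  define nv where "nv = cinn v' v'"
  have nv0: "nv \<noteq> 0" using v'0 by (simp add: nv_def cinn_self_eq0)
  have nvr: "nv = of_real (Re nv)" by (simp add: nv_def complex_eq_iff cinn_self_Im)
  define Q where "Q = (1 / Re nu) *\<^sub>R outer u + (1 / Re nv) *\<^sub>R outer v'"
  have c1: "complex_of_real (1 / Re nu) * c = c / nu" for c by (subst (2) nur) (simp add: field_simps)
  have c2: "complex_of_real (1 / Re nv) * c = c / nv" for c by (subst (2) nvr) (simp add: field_simps)
  have Qv: "Q *v w = (cinn u w / nu) *s u + (cinn v' w / nv) *s v'" for w
    by (simp add: Q_def matrix_vector_mult_add_rdistrib mv_scaleR_left outer_mv c1 c2 nur[symmetric] nvr[symmetric])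
  have aQ: "adj Q = Q" by (simp add: Q_def adj_add adj_scaleR)
  have Qu: "Q *v u = u" using nu0 by (simp add: Qv ov' nu_def[symmetric])
  have Qv': "Q *v v' = v'" using nv0 by (simp add: Qv ov nv_def[symmetric])
  have QQ: "Q ** Q = Q"
    unfolding matrix_eq
  proof
    fix w
    have "(Q ** Q) *v w = Q *v ((cinn u w / nu) *s u + (cinn v' w / nv) *s v')"
      by (simp add: matrix_vector_mul_assoc[symmetric] Qv)
    also have "\<dots> = Q *v w"
      by (simp add: matrix_vector_right_distrib mv_scale_right Qu Qv') (simp add: Qv)
    finally show "(Q ** Q) *v w = Q *v w" .
  qed
  have "support Q = S"
  proof
    show "support Q \<subseteq> S"
    proof
      fix y assume "y \<in> support Q"
      then obtain w where "y = Q *v w" unfolding support_def by blast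
      then show "y \<in> S" using uS v'S sub by (simp add: Qv vec.subspace_add vec.subspace_scale)
    qed
    show "S \<subseteq> support Q"
    proof
      fix s assume "s \<in> S"
      then have "s \<in> vec.span {u, v}" using B(3) uv by auto
      then obtain l m where s: "s = l *s u + m *s v" using span2 by blast
      have "s = (l + m * (cinn u v / nu)) *s u + m *s v'"
        by (simp add: s v'_def algebra_simps vector_sadd_rdistrib)
      then have "s \<in> vec.span {u, v'}" using span2 by blast
      then have "Q *v s = s" by (rule fix_span2[OF Qu Qv'])
      then show "s \<in> support Q" unfolding support_def by (metis rangeI)
    qed
  qed
  then show ?thesis using aQ QQ unfolding orth_proj_onto_def by blast
qed

lemma psd_I_minus:
  assumes "orth_proj_onto Q S" shows "psd (mat 1 - Q)"
proof -
  have aQ: "adj Q = Q" and QQ: "Q ** Q = Q" using assms by (auto simp: orth_proj_onto_def)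
  have "cinn w ((mat 1 - Q) *v w) = cinn ((mat 1 - Q) *v w) ((mat 1 - Q) *v w)" for w
  proof -
    have "cinn (Q *v w) w = cinn w (Q *v w)" using aQ by (simp add: cinn_adj')
    moreover have "cinn (Q *v w) (Q *v w) = cinn w (Q *v w)"
      using aQ QQ by (simp add: cinn_adj' matrix_vector_mul_assoc)
    ultimately show ?thesis
      by (simp add: matrix_vector_mult_diff_rdistrib cinn_diff_left cinn_diff_right)
  qed
  then show ?thesis unfolding psd_def by (simp add: cinn_self_Re cinn_self_Im)
qed

lemma Q_I_minus_zero:
  assumes "orth_proj_onto Q S" shows "Q ** (mat 1 - Q) = 0"
proof -
  have QQ: "Q ** Q = Q" using assms by (auto simp: orth_proj_onto_def)
  show ?thesis unfolding matrix_eq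
    using QQ by (simp add: matrix_vector_mul_assoc[symmetric] matrix_vector_mult_diff_rdistrib
        matrix_vector_mult_diff_distrib) (simp add: matrix_vector_mul_assoc)
qed

lemma alice_mv: "tensor (outer a) (mat 1) *v v = pv a (\<chi> j. \<Sum>i\<in>UNIV. cnj (a$i) * v$(i,j))"
  by (simp add: vec_eq_iff matrix_vector_mult_def outer_def sum_UNIV_prod mat_def sum_distrib_left
      if_distrib if_distribR sum.delta mult_ac cong: if_cong)

lemma sum_if_outer: "(\<Sum>i\<in>UNIV. \<Sum>j\<in>UNIV. if a = i then f i j else 0) = (\<Sum>j\<in>UNIV. f a j)"
  for f :: "'a::finite \<Rightarrow> 'b::finite \<Rightarrow> 'c::comm_monoid_add"
proof -
  have "(\<Sum>j\<in>UNIV. if a = i then f i j else 0) = (if a = i then (\<Sum>j\<in>UNIV. f i j) else 0)" for i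
    by (cases "a = i") simp_all
  then show ?thesis by (simp add: sum.delta')
qed

lemma bob_mv: "tensor (mat 1) (outer b) *v v = pv (\<chi> i. \<Sum>j\<in>UNIV. cnj (b$j) * v$(i,j)) b"
  by (simp add: vec_eq_iff matrix_vector_mult_def outer_def sum_UNIV_prod mat_def sum_distrib_left
      if_distrib if_distribR sum_if_outer mult_ac cong: if_cong)


lemma Q_decomp_mv:
  "(\<Sum>k<n. c k *\<^sub>R outer (x k)) *v v = (\<Sum>k<n. (of_real (c k) * cinn (x k) v) *s x k)"
  by (simp add: mv_sum_left mv_scaleR_left outer_mv vector_smult_assoc)

lemma core:
  fixes S :: "qqvec set" and Q1 :: qqop
  assumes sub: "vec.subspace S" and d2: "vec.dim S = 2" and q1: "orth_proj_onto Q1 S"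
    and sep: "separable Q1"
  shows "locc_povm2 Q1 (mat 1 - Q1)"
proof -
  obtain n cs as bs where h: "\<forall>k<(n::nat). 0 \<le> cs k \<and> norm (as k) = 1 \<and> norm (bs k) = 1"
    and Qd: "Q1 = (\<Sum>k<n. cs k *\<^sub>R tensor (outer (as k)) (outer (bs k)))"
    using sep unfolding separable_def by blast
  define x where "x k = pv (as k) (bs k)" for k
  have Qx: "Q1 = (\<Sum>k<n. cs k *\<^sub>R outer (x k))" by (simp add: Qd x_def tensor_outer)
  have ua: "cinn (as k) (as k) = 1" "cinn (bs k) (bs k) = 1" if "k < n" for k
    using h that by (simp_all add: unit_cinn)
  have ux: "cinn (x k) (x k) = 1" if "k < n" for k using ua[OF that] by (simp add: x_def pv_unit)
  have tr0: "mtrace ((\<Sum>k<n. cs k *\<^sub>R outer (x k)) ** (mat 1 - Q1)) = 0"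
    using Q_I_minus_zero[OF q1] Qx by (simp add: mtrace_def)
  have Rz: "\<forall>k<n. cs k \<noteq> 0 \<longrightarrow> (mat 1 - Q1) *v x k = 0"
    by (rule decomp_trace_zero[OF _ psd_I_minus[OF q1] tr0]) (use h in simp)
  have xS: "x k \<in> S" if "k < n" "cs k \<noteq> 0" for k
  proof -
    have "x k = Q1 *v x k" using Rz that by (simp add: matrix_vector_mult_diff_rdistrib)
    then show ?thesis using orth_range[OF q1] by metis
  qed
  define K where "K = {k. k < n \<and> cs k \<noteq> 0}"
  have SK: "S \<subseteq> vec.span (x ` K)"
  proof
    fix s assume s: "s \<in> S"
    have "s = Q1 *v s" using orth_fix[OF q1 s] by simp
    also have "\<dots> = (\<Sum>k<n. (of_real (cs k) * cinn (x k) s) *s x k)" by (simp add: Qx Q_decomp_mv)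
    also have "\<dots> \<in> vec.span (x ` K)"
    proof (rule vec.span_sum)
      fix k assume "k \<in> {..<n}"
      then show "(of_real (cs k) * cinn (x k) s) *s x k \<in> vec.span (x ` K)"
      proof (cases "cs k = 0")
        case True then show ?thesis by (simp add: vec.span_zero)
      next
        case False
        then have "x k \<in> x ` K" using \<open>k \<in> {..<n}\<close> by (auto simp: K_def)
        then show ?thesis by (intro vec.span_scale vec.span_base)
      qed
    qed
    finally show "s \<in> vec.span (x ` K)" .
  qed
  have "\<exists>i\<in>K. \<exists>j\<in>K. x j \<notin> vec.span {x i}"
  proof (rule ccontr)
    assume "\<not> (\<exists>i\<in>K. \<exists>j\<in>K. x j \<notin> vec.span {x i})"
    then have all: "\<forall>i\<in>K. \<forall>j\<in>K. x j \<in> vec.span {x i}" by blast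
    show False
    proof (cases "K = {}")
      case True
      then have "vec.dim S \<le> card ({}::qqvec set)" using SK by (intro vec.dim_le_card) auto
      then show False using d2 by simp
    next
      case False
      then obtain i where i: "i \<in> K" by blast
      have "x ` K \<subseteq> vec.span {x i}" using all i by auto
      then have "vec.span (x ` K) \<subseteq> vec.span {x i}" by (simp add: vec.span_minimal)
      then have "vec.dim S \<le> card {x i}" using SK by (intro vec.dim_le_card) auto
      then show False using d2 by simp
    qed
  qed
  then obtain i j where i: "i \<in> K" and j: "j \<in> K" and ni: "x j \<notin> vec.span {x i}" by blast
  have iK: "i < n" "cs i \<noteq> 0" and jK: "j < n" "cs j \<noteq> 0" using i j by (auto simp: K_def)
  define a where "a = as i"
  define b where "b = bs i"
  define a' where "a' = as j"
  define b' where "b' = bs j"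
  define X where "X = x i"
  define X' where "X' = x j"
  have X: "X = pv a b" "X' = pv a' b'" by (simp_all add: X_def X'_def x_def a_def b_def a'_def b'_def)
  have ua1: "cinn a a = 1" "cinn b b = 1" "cinn a' a' = 1" "cinn b' b' = 1"
    using ua[OF iK(1)] ua[OF jK(1)] by (simp_all add: a_def b_def a'_def b'_def)
  have uX: "cinn X X = 1" "cinn X' X' = 1" using ux iK jK by (simp_all add: X_def X'_def)
  have XS: "X \<in> S" "X' \<in> S" using xS iK jK by (simp_all add: X_def X'_def)
  have X0: "X \<noteq> 0" using uX by auto
  have niX: "X' \<notin> vec.span {X}" using ni by (simp add: X_def X'_def)
  have SX: "vec.span {X, X'} = S" by (rule span2_eq_subspace[OF sub d2 XS X0 niX])
  have crit: "P = Q1" if "adj P = P" "P *v X = X" "P *v X' = X'" "\<And>v. P *v v \<in> vec.span {X, X'}" for P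
  proof (rule proj_unique[OF q1 that(1)])
    show "\<forall>v. P *v v \<in> S" using that(4) SX by simp
    show "\<forall>s\<in>S. P *v s = s" using fix_span2[OF that(2) that(3)] SX by simp
  qed
  have spanXX: "y \<in> vec.span {X, X'}" if "y = l *s X + m *s X'" for y l m using span2 that by blast
  show ?thesis
  proof (cases "det2 a a' = 0")
    case True
    obtain \<sigma> where \<sigma>: "a' = \<sigma> *s a" using det2_zero[OF unit_nz[OF ua1(1)] True] by blast
    have \<sigma>0: "\<sigma> \<noteq> 0" using \<sigma> ua1(3) by auto
    have db: "det2 b b' \<noteq> 0"
    proof
      assume "det2 b b' = 0"
      then obtain \<tau> where "b' = \<tau> *s b" using det2_zero[OF unit_nz[OF ua1(2)]] by blast
      then have "X' = (\<sigma> * \<tau>) *s X" using \<sigma> X by (simp add: pv_scale_left pv_scale_right vector_smult_assoc mult.commute)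
      then have "X' \<in> vec.span {X}" by (metis vec.span_base vec.span_scale singletonI)
      then show False using niX by simp
    qed
    define P where "P = tensor (outer a) (mat 1 :: qop)"
    have "P = Q1"
    proof (rule crit)
      show "adj P = P" by (simp add: P_def adj_tensor)
      show "P *v X = X" using ua1 by (simp add: P_def X tensor_mv_pv outer_mv)
      have "cinn a a' = \<sigma>" using \<sigma> ua1 by (simp add: cinn_scale_right)
      then show "P *v X' = X'" using \<sigma> by (simp add: P_def X tensor_mv_pv outer_mv)
      fix v
      obtain w where Pv: "P *v v = pv a w" by (simp add: P_def alice_mv)
      obtain l m where w: "w = l *s b + m *s b'" using det2_span[OF db] by blast
      have "pv a w = l *s X + (m / \<sigma>) *s X'"
        using \<sigma>0 by (simp add: w X \<sigma> pv_add_right pv_scale_left pv_scale_right vector_smult_assoc)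
      then show "P *v v \<in> vec.span {X, X'}" using Pv spanXX by simp
    qed
    then show ?thesis using proto_alice[OF ua1(1)] P_def by simp
  next
    case False
    note da = False
    show ?thesis
    proof (cases "det2 b b' = 0")
      case True
      obtain \<sigma> where \<sigma>: "b' = \<sigma> *s b" using det2_zero[OF unit_nz[OF ua1(2)] True] by blast
      have \<sigma>0: "\<sigma> \<noteq> 0" using \<sigma> ua1(4) by auto
      define P where "P = tensor (mat 1 :: qop) (outer b)"
      have "P = Q1"
      proof (rule crit)
        show "adj P = P" by (simp add: P_def adj_tensor)
        show "P *v X = X" using ua1 by (simp add: P_def X tensor_mv_pv outer_mv)
        have "cinn b b' = \<sigma>" using \<sigma> ua1 by (simp add: cinn_scale_right)
        then show "P *v X' = X'" using \<sigma> by (simp add: P_def X tensor_mv_pv outer_mv)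
        fix v
        obtain w where Pv: "P *v v = pv w b" by (simp add: P_def bob_mv)
        obtain l m where w: "w = l *s a + m *s a'" using det2_span[OF da] by blast
        have "pv w b = l *s X + (m / \<sigma>) *s X'"
          using \<sigma>0 by (simp add: w X \<sigma> pv_add_left pv_scale_left pv_scale_right vector_smult_assoc)
        then show "P *v v \<in> vec.span {X, X'}" using Pv spanXX by simp
      qed
      then show ?thesis using proto_bob[OF ua1(2)] P_def by simp
    next
      case False
      note db = False
      have cXX: "cinn X' X = cnj (cinn X X')" by (simp add: cinn_cnj)
      have PQ: "outer X + outer X' = Q1" if o: "cinn X X' = 0"
      proof (rule crit)
        have o': "cinn X' X = 0" using o cXX by simp
        show "adj (outer X + outer X') = outer X + outer X'" by (simp add: adj_add)
        show "(outer X + outer X') *v X = X"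
          using uX o' by (simp add: matrix_vector_mult_add_rdistrib outer_mv)
        show "(outer X + outer X') *v X' = X'"
          using uX o by (simp add: matrix_vector_mult_add_rdistrib outer_mv)
        fix v
        show "(outer X + outer X') *v v \<in> vec.span {X, X'}"
          by (rule spanXX) (simp add: matrix_vector_mult_add_rdistrib outer_mv)
      qed
      show ?thesis
      proof (cases "cinn a a' = 0")
        case True
        then have "cinn X X' = 0" by (simp add: X cinn_pv)
        then show ?thesis using PQ proto_alice_bob[OF ua1(1) ua1(3) True ua1(2) ua1(4)] X by simp
      next
        case False
        note na = False
        show ?thesis
        proof (cases "cinn b b' = 0")
          case True
          then have "cinn X X' = 0" by (simp add: X cinn_pv)
          then show ?thesis using PQ proto_bob_alice[OF ua1(1) ua1(3) True ua1(2) ua1(4)] X by simp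
        next
          case False
          note nb = False
          define z where "z = X' - cinn X X' *s X"
          define w where "w = X - cinn X' X *s X'"
          have zX: "cinn z X = 0"
            using uX by (simp add: z_def cinn_diff_left cinn_scale_left cinn_cnj)
          have X'w: "cinn X' w = 0"
            using uX by (simp add: w_def cinn_diff_right cinn_scale_right)
          have wS: "w \<in> S" unfolding w_def using XS sub
            by (simp add: vec.subspace_diff vec.subspace_scale)
          have Qw: "Q1 *v w = w" by (rule orth_fix[OF q1 wS])
          have "cinn z (Q1 *v w) = (\<Sum>k<n. of_real (cs k) * (cinn (x k) w * cinn z (x k)))"
            by (simp add: Qx Q_decomp_mv cinn_sum_right cinn_scale_right mult_ac)
          also have "\<dots> = 0"
          proof (rule sum.neutral, rule ballI)
            fix k assume k: "k \<in> {..<n}"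
            show "of_real (cs k) * (cinn (x k) w * cinn z (x k)) = 0"
            proof (cases "cs k = 0")
              case True then show ?thesis by simp
            next
              case False
              then have "x k \<in> vec.span {X, X'}" using xS[of k] k SX by simp
              then obtain l m where xk: "x k = l *s X + m *s X'" using span2 by blast
              have "pv (as k) (bs k) = l *s pv a b + m *s pv a' b'" using xk X by (simp add: x_def)
              then have "l = 0 \<or> m = 0" using product_in_span2 da db by blast
              then show ?thesis
              proof
                assume "l = 0"
                then have "cinn (x k) w = 0" using xk X'w by (simp add: cinn_scale_left)
                then show ?thesis by simp
              next
                assume "m = 0"
                then have "cinn z (x k) = 0" using xk zX by (simp add: cinn_scale_right)
                then show ?thesis by simp
              qed
            qed
          qed
          finally have zw0: "cinn z w = 0" using Qw by simp
          have zz: "cinn z X' = cinn z z"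
            using zX by (simp add: z_def cinn_diff_right cinn_scale_right cinn_diff_left)
          have z0: "z \<noteq> 0"
          proof
            assume "z = 0"
            then have "X' = cinn X X' *s X" by (simp add: z_def)
            then have "X' \<in> vec.span {X}" by (metis vec.span_base vec.span_scale singletonI)
            then show False using niX by simp
          qed
          have "cinn z w = - (cinn X' X * cinn z X')"
            using zX by (simp add: w_def cinn_diff_right cinn_scale_right)
          moreover have "cinn X' X \<noteq> 0"
          proof -
            have "cinn a' a = cnj (cinn a a')" "cinn b' b = cnj (cinn b b')" by (simp_all add: cinn_cnj)
            then show ?thesis using na nb by (simp add: X cinn_pv)
          qed
          moreover have "cinn z X' \<noteq> 0" using zz z0 by (simp add: cinn_self_eq0)
          ultimately show ?thesis using zw0 by simp
        qed
      qed
    qed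
  qed
qed


theorem mainTheorem2:
  fixes \<rho>1 \<rho>2 :: qqop
  assumes "density \<rho>1" and "density \<rho>2"
    and "rank \<rho>1 = 2" and "rank \<rho>2 = 2"
    and "\<forall>x\<in>support \<rho>1. \<forall>y\<in>support \<rho>2. cinn x y = 0"
  shows "((\<exists>P1 P2. sep_povm2 P1 P2 \<and> perfectly_distinguishes P1 P2 \<rho>1 \<rho>2)
            \<longleftrightarrow> (\<exists>P1 P2. locc_povm2 P1 P2 \<and> perfectly_distinguishes P1 P2 \<rho>1 \<rho>2))
       \<and> ((\<exists>P1 P2. locc_povm2 P1 P2 \<and> perfectly_distinguishes P1 P2 \<rho>1 \<rho>2)
            \<longleftrightarrow> (\<forall>Q1 Q2. orth_proj_onto Q1 (support \<rho>1) \<longrightarrow> orth_proj_onto Q2 (support \<rho>2)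
                   \<longrightarrow> separable Q1 \<and> separable Q2))"
proof -
  have r1: "psd \<rho>1" and r2: "psd \<rho>2" and t1: "mtrace \<rho>1 = 1" and t2: "mtrace \<rho>2 = 1"
    using assms(1,2) by (auto simp: density_def)
  have d1: "vec.dim (support \<rho>1) = 2" by (rule dim_support_2[OF assms(1,3)])
  have d2: "vec.dim (support \<rho>2) = 2" by (rule dim_support_2[OF assms(2,4)])
  have orth: "\<forall>x\<in>support \<rho>1. \<forall>y\<in>support \<rho>2. cinn x y = 0" by (rule assms(5))
  have dec: "\<exists>s\<in>support \<rho>1. \<exists>t\<in>support \<rho>2. v = s + t" for v
    by (rule decomp_sum[OF subspace_support subspace_support _ orth]) (simp add: d1 d2)
  let ?A = "\<exists>P1 P2. sep_povm2 P1 P2 \<and> perfectly_distinguishes P1 P2 \<rho>1 \<rho>2"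
  let ?B = "\<exists>P1 P2. locc_povm2 P1 P2 \<and> perfectly_distinguishes P1 P2 \<rho>1 \<rho>2"
  let ?C = "\<forall>Q1 Q2. orth_proj_onto Q1 (support \<rho>1) \<longrightarrow> orth_proj_onto Q2 (support \<rho>2)
                   \<longrightarrow> separable Q1 \<and> separable Q2"
  have BA: "?B \<Longrightarrow> ?A" using locc_to_sep by blast
  have AC: "?A \<Longrightarrow> ?C"
  proof -
    assume ?A
    then obtain P1 P2 where "sep_povm2 P1 P2" "perfectly_distinguishes P1 P2 \<rho>1 \<rho>2" by blast
    then show ?C using sep_to_proj[OF r1 r2 dec orth] by blast
  qed
  have CB: "?C \<Longrightarrow> ?B"
  proof -
    assume C: ?C
    obtain Q1 where q1: "orth_proj_onto Q1 (support \<rho>1)"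
      using exists_proj_dim2[OF subspace_support d1] by blast
    obtain Q2 where q2: "orth_proj_onto Q2 (support \<rho>2)"
      using exists_proj_dim2[OF subspace_support d2] by blast
    have s1: "separable Q1" using C q1 q2 by blast
    have L: "locc_povm2 Q1 (mat 1 - Q1)" by (rule core[OF subspace_support d1 q1 s1])
    have e1: "Q1 ** \<rho>1 = \<rho>1"
      unfolding matrix_eq
      by (simp add: matrix_vector_mul_assoc[symmetric] orth_fix[OF q1] support_def)
    have e2: "Q1 ** \<rho>2 = 0"
    proof -
      have "Q1 *v (\<rho>2 *v v) = 0" for v
        by (rule orth_kill[OF q1]) (use orth in \<open>auto simp: support_def\<close>)
      then show ?thesis unfolding matrix_eq by (simp add: matrix_vector_mul_assoc[symmetric])
    qed
    have e3: "(mat 1 - Q1) ** \<rho>1 = 0"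
      using e1 unfolding matrix_eq
      by (simp add: matrix_vector_mul_assoc[symmetric] matrix_vector_mult_diff_rdistrib)
    have e4: "(mat 1 - Q1) ** \<rho>2 = \<rho>2"
      using e2 unfolding matrix_eq
      by (simp add: matrix_vector_mul_assoc[symmetric] matrix_vector_mult_diff_rdistrib)
    have "perfectly_distinguishes Q1 (mat 1 - Q1) \<rho>1 \<rho>2"
      unfolding perfectly_distinguishes_def using e1 e2 e3 e4 t1 t2 by (simp add: mtrace_def)
    then show ?B using L by blast
  qed
  show ?thesis using AC BA CB by blast
qed

end
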